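(* Let $\mathcal E=(\mathcal E_t)_{t>0}$ be a product system and let $u=(u_t)_{t>0}$ be a normalized unit of $\mathcal E$. Then the set $A^{\mathcal E}_u$ of all additive units of $u$ is a Hilbert space under pointwise addition and scalar multiplication and the inner product $\langle a,b\rangle:=\langle a_1,b_1\rangle_{\mathcal E_1}$, and the set $R^{\mathcal E}_u$ of all roots of $u$ is a closed subspace of $A^{\mathcal E}_u$ of co-dimension one.
   Context: A product system (of Hilbert spaces, in the sense of Arveson) is a measurable family $(\mathcal E_t)_{t>0}$ of separable Hilbert spaces with an associative multiplication $\mathcal E_s\times\mathcal E_t\to\mathcal E_{s+t}$, $(a,b)\mapsto ab$, such that $\langle ab,a'b'\rangle=\langle a,a'\rangle\langle b,b'\rangle$ and $\mathcal E_{s+t}=\overline{\mathrm{span}}\,\mathcal E_s\mathcal E_t$ (so $a\otimes b\mapsto ab$ is a unitary $\mathcal E_s\otimes\mathcal E_t\cong\mathcal E_{s+t}$), with the usual measurability requirements. A unit is a measurable section $(u_t)_{t>0}$ of nonzero vectors $u_t\in\mathcal E_t$ with $u_{s+t}=u_su_t$ for all $s,t>0$; it is normalized if $\|u_t\|=1$ for all $t$. An additive unit of a unit $u$ is a measurable section $(a_t)_{t>0}$, $a_t\in\mathcal E_t$, with $a_{s+t}=a_su_t+u_sa_t$ for all $s,t>0$. A root of $u$ is an additive unit $a$ of $u$ with $\langle a_t,u_t\rangle=0$ for all $t>0$. *)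

theory Defs
  imports "HOL-Analysis.Analysis"
begin

text \<open>Every separable Hilbert space is isometric to a closed subspace of l2(N).
  We realise each fibre of a product system as a closed subspace of l2(N),
  whose vectors are represented as functions nat => complex.\<close>

type_synonym l2vec = "nat \<Rightarrow> complex"

definition l2 :: "l2vec set" where
  "l2 = {x. summable (\<lambda>n. (cmod (x n))\<^sup>2)}"

definition l2_inner :: "l2vec \<Rightarrow> l2vec \<Rightarrow> complex" where
  "l2_inner x y = (\<Sum>n. x n * cnj (y n))"

definition l2_norm :: "l2vec \<Rightarrow> real" where
  "l2_norm x = sqrt (\<Sum>n. (cmod (x n))\<^sup>2)"

definition l2_add :: "l2vec \<Rightarrow> l2vec \<Rightarrow> l2vec" where
  "l2_add x y = (\<lambda>n. x n + y n)"

definition l2_scale :: "complex \<Rightarrow> l2vec \<Rightarrow> l2vec" where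
  "l2_scale c x = (\<lambda>n. c * x n)"

definition l2_zero :: l2vec where
  "l2_zero = (\<lambda>n. 0)"

definition l2_diff :: "l2vec \<Rightarrow> l2vec \<Rightarrow> l2vec" where
  "l2_diff x y = (\<lambda>n. x n - y n)"

definition l2_closed_subspace :: "l2vec set \<Rightarrow> bool" where
  "l2_closed_subspace S \<longleftrightarrow>
     S \<subseteq> l2 \<and> l2_zero \<in> S \<and>
     (\<forall>x\<in>S. \<forall>y\<in>S. l2_add x y \<in> S) \<and>
     (\<forall>c. \<forall>x\<in>S. l2_scale c x \<in> S) \<and>
     (\<forall>X x. (\<forall>k. X k \<in> S) \<and> x \<in> l2 \<and>
            (\<lambda>k. l2_norm (l2_diff (X k) x)) \<longlonglongrightarrow> 0 \<longrightarrow> x \<in> S)"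

definition l2_span_dense :: "l2vec set \<Rightarrow> l2vec set \<Rightarrow> bool" where
  "l2_span_dense G S \<longleftrightarrow>
     (\<forall>z\<in>S. \<forall>\<epsilon>>0. \<exists>(m::nat) (c::nat \<Rightarrow> complex) g.
        (\<forall>i<m. g i \<in> G) \<and>
        l2_norm (\<lambda>k. z k - (\<Sum>i<m. c i * g i k)) < \<epsilon>)"

text \<open>A section of the family \<open>E\<close> is a map \<open>f\<close> with \<open>f t \<in> E t\<close> for \<open>t > 0\<close>;
  it is measurable if all its coordinates are Borel functions on (0,oo)
  (weak = Borel measurability in the separable space l2(N)).\<close>
definition meas_section :: "(real \<Rightarrow> l2vec set) \<Rightarrow> (real \<Rightarrow> l2vec) \<Rightarrow> bool" where
  "meas_section E f \<longleftrightarrow>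
     (\<forall>t>0. f t \<in> E t) \<and>
     (\<forall>n. (\<lambda>t. f t n) \<in> borel_measurable (restrict_space borel {0<..}))"

text \<open>\<open>pm s t x y\<close> is the product \<open>x y \<in> E (s+t)\<close> of \<open>x \<in> E s\<close> and \<open>y \<in> E t\<close>.\<close>
definition product_system ::
  "(real \<Rightarrow> l2vec set) \<Rightarrow> (real \<Rightarrow> real \<Rightarrow> l2vec \<Rightarrow> l2vec \<Rightarrow> l2vec) \<Rightarrow> bool" where
  "product_system E pm \<longleftrightarrow>
     (\<forall>t>0. l2_closed_subspace (E t)) \<and>
     (\<forall>s>0. \<forall>t>0. \<forall>x\<in>E s. \<forall>y\<in>E t. pm s t x y \<in> E (s + t)) \<and>
     (\<forall>r>0. \<forall>s>0. \<forall>t>0. \<forall>x\<in>E r. \<forall>y\<in>E s. \<forall>z\<in>E t.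
        pm (r + s) t (pm r s x y) z = pm r (s + t) x (pm s t y z)) \<and>
     (\<forall>s>0. \<forall>t>0. \<forall>x\<in>E s. \<forall>x'\<in>E s. \<forall>y\<in>E t. \<forall>y'\<in>E t.
        l2_inner (pm s t x y) (pm s t x' y') = l2_inner x x' * l2_inner y y') \<and>
     (\<forall>s>0. \<forall>t>0. l2_span_dense {pm s t x y |x y. x \<in> E s \<and> y \<in> E t} (E (s + t))) \<and>
     \<comment> \<open>measurability: a fundamental sequence of measurable sections \<dots>\<close>
     (\<exists>\<xi>::nat \<Rightarrow> real \<Rightarrow> l2vec. (\<forall>k. meas_section E (\<xi> k)) \<and>
        (\<forall>t>0. l2_span_dense (range (\<lambda>k. \<xi> k t)) (E t))) \<and>
     \<comment> \<open>\<dots> and jointly measurable multiplication\<close>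
     (\<forall>x y. meas_section E x \<and> meas_section E y \<longrightarrow>
        (\<forall>n. (\<lambda>(s, t). pm s t (x s) (y t) n)
               \<in> borel_measurable (restrict_space borel ({0<..} \<times> {0<..}))))"

definition ps_unit ::
  "(real \<Rightarrow> l2vec set) \<Rightarrow> (real \<Rightarrow> real \<Rightarrow> l2vec \<Rightarrow> l2vec \<Rightarrow> l2vec) \<Rightarrow> (real \<Rightarrow> l2vec) \<Rightarrow> bool" where
  "ps_unit E pm u \<longleftrightarrow>
     meas_section E u \<and> (\<forall>t>0. u t \<noteq> l2_zero) \<and>
     (\<forall>s>0. \<forall>t>0. u (s + t) = pm s t (u s) (u t))"

definition normalized_unit ::
  "(real \<Rightarrow> l2vec set) \<Rightarrow> (real \<Rightarrow> real \<Rightarrow> l2vec \<Rightarrow> l2vec \<Rightarrow> l2vec) \<Rightarrow> (real \<Rightarrow> l2vec) \<Rightarrow> bool" where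
  "normalized_unit E pm u \<longleftrightarrow> ps_unit E pm u \<and> (\<forall>t>0. l2_norm (u t) = 1)"

text \<open>Sections are only defined on (0,oo); to identify them as functions we
  normalise them to be \<open>0\<close> for \<open>t \<le> 0\<close>.\<close>
definition additive_unit ::
  "(real \<Rightarrow> l2vec set) \<Rightarrow> (real \<Rightarrow> real \<Rightarrow> l2vec \<Rightarrow> l2vec \<Rightarrow> l2vec) \<Rightarrow> (real \<Rightarrow> l2vec)
     \<Rightarrow> (real \<Rightarrow> l2vec) \<Rightarrow> bool" where
  "additive_unit E pm u a \<longleftrightarrow>
     meas_section E a \<and> (\<forall>t\<le>0. a t = l2_zero) \<and>
     (\<forall>s>0. \<forall>t>0. a (s + t) = l2_add (pm s t (a s) (u t)) (pm s t (u s) (a t)))"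

definition root ::
  "(real \<Rightarrow> l2vec set) \<Rightarrow> (real \<Rightarrow> real \<Rightarrow> l2vec \<Rightarrow> l2vec \<Rightarrow> l2vec) \<Rightarrow> (real \<Rightarrow> l2vec)
     \<Rightarrow> (real \<Rightarrow> l2vec) \<Rightarrow> bool" where
  "root E pm u a \<longleftrightarrow> additive_unit E pm u a \<and> (\<forall>t>0. l2_inner (a t) (u t) = 0)"

definition add_units where "add_units E pm u = {a. additive_unit E pm u a}"
definition roots where "roots E pm u = {a. root E pm u a}"

definition sec_add :: "(real \<Rightarrow> l2vec) \<Rightarrow> (real \<Rightarrow> l2vec) \<Rightarrow> real \<Rightarrow> l2vec" where
  "sec_add a b = (\<lambda>t. l2_add (a t) (b t))"
definition sec_scale :: "complex \<Rightarrow> (real \<Rightarrow> l2vec) \<Rightarrow> real \<Rightarrow> l2vec" where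
  "sec_scale c a = (\<lambda>t. l2_scale c (a t))"
definition sec_zero :: "real \<Rightarrow> l2vec" where
  "sec_zero = (\<lambda>t. l2_zero)"
definition sec_inner :: "(real \<Rightarrow> l2vec) \<Rightarrow> (real \<Rightarrow> l2vec) \<Rightarrow> complex" where
  "sec_inner a b = l2_inner (a 1) (b 1)"

definition hilbert_space ::
  "'v set \<Rightarrow> ('v \<Rightarrow> 'v \<Rightarrow> 'v) \<Rightarrow> (complex \<Rightarrow> 'v \<Rightarrow> 'v) \<Rightarrow> 'v \<Rightarrow> ('v \<Rightarrow> 'v \<Rightarrow> complex) \<Rightarrow> bool" where
  "hilbert_space V vadd smul zero ip \<longleftrightarrow>
     \<comment> \<open>complex vector space\<close>
     zero \<in> V \<and> (\<forall>x\<in>V. \<forall>y\<in>V. vadd x y \<in> V) \<and> (\<forall>c. \<forall>x\<in>V. smul c x \<in> V) \<and>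
     (\<forall>x\<in>V. \<forall>y\<in>V. \<forall>z\<in>V. vadd (vadd x y) z = vadd x (vadd y z)) \<and>
     (\<forall>x\<in>V. \<forall>y\<in>V. vadd x y = vadd y x) \<and>
     (\<forall>x\<in>V. vadd x zero = x) \<and>
     (\<forall>x\<in>V. \<exists>y\<in>V. vadd x y = zero) \<and>
     (\<forall>c d. \<forall>x\<in>V. smul c (smul d x) = smul (c * d) x) \<and>
     (\<forall>x\<in>V. smul 1 x = x) \<and>
     (\<forall>c. \<forall>x\<in>V. \<forall>y\<in>V. smul c (vadd x y) = vadd (smul c x) (smul c y)) \<and>
     (\<forall>c d. \<forall>x\<in>V. smul (c + d) x = vadd (smul c x) (smul d x)) \<and>
     \<comment> \<open>inner product\<close>
     (\<forall>x\<in>V. \<forall>y\<in>V. \<forall>z\<in>V. ip (vadd x y) z = ip x z + ip y z) \<and>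
     (\<forall>c. \<forall>x\<in>V. \<forall>y\<in>V. ip (smul c x) y = c * ip x y) \<and>
     (\<forall>x\<in>V. \<forall>y\<in>V. ip y x = cnj (ip x y)) \<and>
     (\<forall>x\<in>V. ip x x \<in> \<real> \<and> Re (ip x x) \<ge> 0) \<and>
     (\<forall>x\<in>V. ip x x = 0 \<longrightarrow> x = zero) \<and>
     \<comment> \<open>completeness w.r.t. the norm \<open>sqrt (Re (ip x x))\<close>\<close>
     (\<forall>X. (\<forall>k. X k \<in> V) \<and>
          (\<forall>\<epsilon>>0. \<exists>N. \<forall>m\<ge>N. \<forall>n\<ge>N.
              sqrt (Re (ip (vadd (X m) (smul (-1) (X n))) (vadd (X m) (smul (-1) (X n))))) < \<epsilon>)
        \<longrightarrow> (\<exists>x\<in>V. (\<lambda>k. sqrt (Re (ip (vadd (X k) (smul (-1) x)) (vadd (X k) (smul (-1) x)))))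
                    \<longlonglongrightarrow> 0))"

definition closed_subspace_of ::
  "'v set \<Rightarrow> 'v set \<Rightarrow> ('v \<Rightarrow> 'v \<Rightarrow> 'v) \<Rightarrow> (complex \<Rightarrow> 'v \<Rightarrow> 'v) \<Rightarrow> 'v \<Rightarrow> ('v \<Rightarrow> 'v \<Rightarrow> complex) \<Rightarrow> bool" where
  "closed_subspace_of W V vadd smul zero ip \<longleftrightarrow>
     W \<subseteq> V \<and> zero \<in> W \<and> (\<forall>x\<in>W. \<forall>y\<in>W. vadd x y \<in> W) \<and> (\<forall>c. \<forall>x\<in>W. smul c x \<in> W) \<and>
     (\<forall>X x. (\<forall>k. X k \<in> W) \<and> x \<in> V \<and>
        (\<lambda>k. sqrt (Re (ip (vadd (X k) (smul (-1) x)) (vadd (X k) (smul (-1) x))))) \<longlonglongrightarrow> 0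
        \<longrightarrow> x \<in> W)"

definition codim_one ::
  "'v set \<Rightarrow> 'v set \<Rightarrow> ('v \<Rightarrow> 'v \<Rightarrow> 'v) \<Rightarrow> (complex \<Rightarrow> 'v \<Rightarrow> 'v) \<Rightarrow> bool" where
  "codim_one W V vadd smul \<longleftrightarrow>
     (\<exists>a\<in>V. a \<notin> W \<and> (\<forall>b\<in>V. \<exists>c. \<exists>r\<in>W. b = vadd r (smul c a)))"

end

theory Submission
  imports Defs
begin

definition hh :: "real \<Rightarrow> real" where "hh y = y / (1 + \<bar>y\<bar>)"
lemma hh_bound: "\<bar>hh y\<bar> \<le> 1"
proof -
  have "\<bar>y\<bar> \<le> 1 + \<bar>y\<bar>" by simp
  then show ?thesis unfolding hh_def abs_divide by (simp add: divide_le_eq)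
qed
lemma hh_pos: "y \<ge> 0 \<Longrightarrow> hh y = 1 - 1 / (1 + y)"
  unfolding hh_def by (simp add: field_simps)
lemma hh_neg: "y \<le> 0 \<Longrightarrow> hh y = 1 / (1 - y) - 1"
  unfolding hh_def by (simp add: field_simps)
lemma hh_mono: "a < b \<Longrightarrow> hh a < hh b"
proof (cases "a \<ge> 0")
  case True
  assume "a < b"
  then show ?thesis using True by (simp add: hh_pos frac_less2)
next
  case False
  assume ab: "a < b"
  show ?thesis
  proof (cases "b \<ge> 0")
    case True
    have "hh a < 0" using False hh_neg[of a] by (simp add: divide_less_eq)
    moreover have "hh b \<ge> 0" using True unfolding hh_def by simp
    ultimately show ?thesis by simp
  next
    case F2: False
    then show ?thesis using False ab by (simp add: hh_neg frac_less2)
  qed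
qed
lemma hh_lip1: "b \<le> a \<Longrightarrow> hh a - hh b \<le> a - b"
proof -
  assume ba: "b \<le> a"
  show ?thesis
  proof (cases "b \<ge> 0")
    case True
    then have "hh a - hh b = (a - b) / ((1+a)*(1+b))" using ba by (simp add: hh_pos field_simps)
    also have "\<dots> \<le> (a - b) / 1"
      using True ba mult_mono[of 1 "1+a" 1 "1+b"] by (intro divide_left_mono) auto
    finally show ?thesis by simp
  next
    case False
    show ?thesis
    proof (cases "a \<ge> 0")
      case True
      have "hh a \<le> a" using True unfolding hh_def by (simp add: divide_le_eq algebra_simps)
      moreover have "hh b \<ge> b" using False unfolding hh_def by (simp add: le_divide_eq algebra_simps)
      ultimately show ?thesis by simp
    next
      case F2: False
      then have "hh a - hh b = (a - b) / ((1-a)*(1-b))" using False by (simp add: hh_neg field_simps)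
      also have "\<dots> \<le> (a - b) / 1"
      using False F2 ba mult_mono[of 1 "1-a" 1 "1-b"] by (intro divide_left_mono) auto
      finally show ?thesis by simp
    qed
  qed
qed
lemma hh_mono': "b \<le> a \<Longrightarrow> hh b \<le> hh a"
  using hh_mono[of b a] by (cases "b = a") auto
lemma hh_lip: "\<bar>hh a - hh b\<bar> \<le> \<bar>a - b\<bar>"
  using hh_lip1[of a b] hh_lip1[of b a] hh_mono'[of a b] hh_mono'[of b a]
  by (cases "b \<le> a") auto
lemma hh_cont: "continuous_on UNIV hh" unfolding hh_def
  by (intro continuous_intros) (auto simp: add_pos_nonneg)

lemma abs_integral_le:
  fixes g :: "'a \<Rightarrow> real"
  shows "\<bar>integral\<^sup>L M g\<bar> \<le> (\<integral>x. \<bar>g x\<bar> \<partial>M)"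
  using integral_norm_bound[of M g] by simp

lemma integrable_ind_bounded:
  fixes g :: "real \<Rightarrow> real"
  assumes g: "g \<in> borel_measurable borel" and b: "\<And>x. \<bar>g x\<bar> \<le> 1" and ab: "a \<le> b"
  shows "integrable lborel (\<lambda>x. indicator {a..b} x * g x)"
proof (rule Bochner_Integration.integrable_bound[of lborel "indicator {a..b}"])
  show "integrable lborel (indicator {a..b} :: real \<Rightarrow> real)"
    using ab by (intro integrable_real_indicator) auto
  show "(\<lambda>x. indicator {a..b} x * g x) \<in> borel_measurable lborel" using g by simp
  show "AE x in lborel. norm (indicator {a..b} x * g x) \<le> norm (indicator {a..b} x :: real)"
    using b by (auto simp: indicator_def abs_mult)
qed

lemma additive_nat_mult:
  fixes f :: "real \<Rightarrow> real"
  assumes add: "\<And>s t. s>0 \<Longrightarrow> t>0 \<Longrightarrow> f (s+t) = f s + f t" and x: "x > 0"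
  shows "f (real (Suc n) * x) = real (Suc n) * f x"
proof (induction n)
  case 0 then show ?case by simp
next
  case (Suc n)
  have "f (real (Suc (Suc n)) * x) = f (real (Suc n) * x + x)" by (simp add: algebra_simps)
  also have "\<dots> = f (real (Suc n) * x) + f x" using x by (intro add) auto
  finally show ?case using Suc by (simp add: algebra_simps)
qed

lemma additive_rat:
  fixes f :: "real \<Rightarrow> real"
  assumes add: "\<And>s t. s>0 \<Longrightarrow> t>0 \<Longrightarrow> f (s+t) = f s + f t"
  shows "f (real (Suc m) / real (Suc k)) = real (Suc m) / real (Suc k) * f 1"
proof -
  have "real (Suc k) * f (real (Suc m) / real (Suc k)) = f (real (Suc k) * (real (Suc m) / real (Suc k)))"
    by (rule additive_nat_mult[OF add, symmetric]) auto
  also have "\<dots> = f (real (Suc m) * 1)" by simp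
  also have "\<dots> = real (Suc m) * f 1" by (rule additive_nat_mult[OF add]) auto
  finally show ?thesis by (simp add: field_simps)
qed

lemma additive_measurable_linear:
  fixes f :: "real \<Rightarrow> real"
  assumes meas: "f \<in> borel_measurable (restrict_space borel {0<..})"
    and add: "\<And>s t. s>0 \<Longrightarrow> t>0 \<Longrightarrow> f (s+t) = f s + f t"
    and t: "t > 0"
  shows "f t = t * f 1"
proof -
  define F where "F x = (if x \<in> {0<..} then f x else 0)" for x :: real
  have Fm: "F \<in> borel_measurable borel"
    using meas unfolding F_def by (subst (asm) measurable_restrict_space_iff) auto
  have Fm2[measurable]: "(\<lambda>x. hh (c + F x)) \<in> borel_measurable borel" for c
    using continuous_on_compose2[OF hh_cont] Fm
    by (intro measurable_compose[OF _ borel_measurable_continuous_onI[OF hh_cont]]) auto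
  have Fpos: "x > 0 \<Longrightarrow> F x = f x" for x unfolding F_def by simp
  define G where "G c = (\<integral>x. indicator {1..2} x * hh (c + F x) \<partial>lborel)" for c
  define H where "H s = (\<integral>x. indicator {1+s..2+s} x * hh (F x) \<partial>lborel)" for s
  have int: "integrable lborel (\<lambda>x. indicator {a..b} x * hh (c + F x))" if "a \<le> b" for a b c
    using that by (intro integrable_ind_bounded hh_bound) auto
  have int0: "integrable lborel (\<lambda>x. indicator {a..b} x * hh (F x))" if "a \<le> b" for a b
    using int[OF that, of 0] by simp
  have Glip: "\<bar>G c - G d\<bar> \<le> \<bar>c - d\<bar>" for c d
  proof -
    have eq: "G c - G d = (\<integral>x. indicator {1..2} x * hh (c + F x) - indicator {1..2} x * hh (d + F x) \<partial>lborel)"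
      unfolding G_def by (subst Bochner_Integration.integral_diff) (auto intro: int)
    have "\<bar>(\<integral>x. indicator {1..2} x * hh (c + F x) - indicator {1..2} x * hh (d + F x) \<partial>lborel)\<bar> \<le> (\<integral>x. \<bar>indicator {1..2} x * hh (c + F x) - indicator {1..2} x * hh (d + F x)\<bar> \<partial>lborel)"
      by (rule abs_integral_le)
    also have "\<dots> \<le> (\<integral>x. \<bar>c - d\<bar> * indicator {1..2::real} x \<partial>lborel)"
    proof (rule Bochner_Integration.integral_mono)
      show "integrable lborel (\<lambda>x. \<bar>indicator {1..2} x * hh (c + F x) - indicator {1..2} x * hh (d + F x)\<bar>)"
        by (intro integrable_abs Bochner_Integration.integrable_diff int) auto
      show "integrable lborel (\<lambda>x. \<bar>c - d\<bar> * indicator {1..2::real} x :: real)"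
        by (intro integrable_mult_right integrable_real_indicator) auto
      fix x :: real
      show "\<bar>indicator {1..2} x * hh (c + F x) - indicator {1..2} x * hh (d + F x)\<bar> \<le> \<bar>c - d\<bar> * indicator {1..2} x"
        using hh_lip[of "c + F x" "d + F x"] by (auto simp: indicator_def)
    qed
    also have "\<dots> = \<bar>c - d\<bar>" by simp
    finally show ?thesis using eq by simp
  qed
  have Gmono: "G c < G d" if cd: "c < d" for c d
  proof -
    let ?g = "\<lambda>x. indicator {1..2} x * hh (d + F x) - indicator {1..2} x * hh (c + F x)"
    have ig: "integrable lborel ?g" by (intro Bochner_Integration.integrable_diff int) auto
    have nn: "0 \<le> ?g x" for x using hh_mono[of "c + F x" "d + F x"] cd by (auto simp: indicator_def)
    have "G d - G c = integral\<^sup>L lborel ?g"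
      unfolding G_def by (subst Bochner_Integration.integral_diff) (auto intro: int)
    moreover have "integral\<^sup>L lborel ?g \<noteq> 0"
    proof
      assume "integral\<^sup>L lborel ?g = 0"
      then have "AE x in lborel. ?g x = 0" using integral_nonneg_eq_0_iff_AE[OF ig] nn by auto
      then have "AE x in lborel. x \<notin> {1..2::real}"
      proof (rule eventually_mono)
        fix x :: real assume g0: "?g x = 0"
        show "x \<notin> {1..2}"
        proof
          assume "x \<in> {1..2}"
          then show False using g0 hh_mono[of "c + F x" "d + F x"] cd by (simp add: indicator_def)
        qed
      qed
      then have "emeasure lborel {1..2::real} = 0"
        by (subst (asm) AE_iff_measurable[of "{1..2}"]) auto
      then show False by simp
    qed
    moreover have "integral\<^sup>L lborel ?g \<ge> 0" using nn by (intro Bochner_Integration.integral_nonneg) auto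
    ultimately show ?thesis by simp
  qed
  have GH: "G (F s) = H s" if s: "s > 0" for s
  proof -
    have "H s = \<bar>1\<bar> *\<^sub>R (\<integral>x. indicator {1+s..2+s} (s + 1 * x) * hh (F (s + 1 * x)) \<partial>lborel)"
      unfolding H_def by (rule lborel_integral_real_affine) simp
    also have "\<dots> = G (F s)" unfolding G_def
    proof (simp, intro Bochner_Integration.integral_cong refl)
      fix x :: real
      show "indicator {1+s..2+s} (s + x) * hh (F (s + x)) = indicator {1..2} x * hh (F s + F x)"
      proof (cases "x \<in> {1..2}")
        case True
        then have "F (s + x) = F s + F x" using s by (simp add: Fpos add)
        then show ?thesis using True by (simp add: indicator_def)
      qed (auto simp: indicator_def)
    qed
    finally show ?thesis by simp
  qed
  have Hlip: "\<bar>H s - H s'\<bar> \<le> 2 * (s' - s)" if ss: "s \<le> s'" for s s'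
  proof -
    have eq: "H s - H s' = (\<integral>x. indicator {1+s..2+s} x * hh (F x) - indicator {1+s'..2+s'} x * hh (F x) \<partial>lborel)"
      unfolding H_def by (subst Bochner_Integration.integral_diff) (auto intro: int0)
    have "\<bar>(\<integral>x. indicator {1+s..2+s} x * hh (F x) - indicator {1+s'..2+s'} x * hh (F x) \<partial>lborel)\<bar> \<le> (\<integral>x. \<bar>indicator {1+s..2+s} x * hh (F x) - indicator {1+s'..2+s'} x * hh (F x)\<bar> \<partial>lborel)"
      by (rule abs_integral_le)
    also have "\<dots> \<le> (\<integral>x. indicator {1+s..1+s'} x + indicator {2+s..2+s'} x \<partial>lborel)"
    proof (rule Bochner_Integration.integral_mono)
      show "integrable lborel (\<lambda>x. \<bar>indicator {1+s..2+s} x * hh (F x) - indicator {1+s'..2+s'} x * hh (F x)\<bar>)"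
        by (intro integrable_abs Bochner_Integration.integrable_diff int0) auto
      show "integrable lborel (\<lambda>x. indicator {1+s..1+s'} x + indicator {2+s..2+s'} x :: real)"
        using ss by (intro Bochner_Integration.integrable_add integrable_real_indicator) auto
      fix x :: real
      have "\<bar>indicator {1+s..2+s} x - indicator {1+s'..2+s'} x\<bar> \<le> (indicator {1+s..1+s'} x + indicator {2+s..2+s'} x :: real)"
        using ss by (auto simp: indicator_def)
      moreover have "\<bar>indicator {1+s..2+s} x * hh (F x) - indicator {1+s'..2+s'} x * hh (F x)\<bar>
          = \<bar>indicator {1+s..2+s} x - indicator {1+s'..2+s'} x\<bar> * \<bar>hh (F x)\<bar>"
        by (simp add: left_diff_distrib[symmetric] abs_mult)
      moreover have "\<bar>indicator {1+s..2+s} x - indicator {1+s'..2+s'} x\<bar> * \<bar>hh (F x)\<bar> \<le> \<bar>indicator {1+s..2+s} x - indicator {1+s'..2+s'} x :: real\<bar>"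
        using hh_bound[of "F x"] by (simp add: mult_left_le)
      ultimately show "\<bar>indicator {1+s..2+s} x * hh (F x) - indicator {1+s'..2+s'} x * hh (F x)\<bar> \<le> indicator {1+s..1+s'} x + indicator {2+s..2+s'} x"
        by linarith
    qed
    also have "\<dots> = 2 * (s' - s)"
      using ss by (subst Bochner_Integration.integral_add) (auto intro!: integrable_real_indicator)
    finally show ?thesis using eq by simp
  qed
  have approx: "\<bar>G (f t) - G (t * f 1)\<bar> \<le> (2 + \<bar>f 1\<bar>) / real (Suc n)" for n
  proof -
    define m where "m = nat \<lfloor>real (Suc n) * t\<rfloor>"
    define q where "q = real (Suc m) / real (Suc n)"
    have m1: "real m \<le> real (Suc n) * t" using t unfolding m_def by (simp add: of_nat_nat)
    have m2: "real (Suc n) * t < real (Suc m)" unfolding m_def using t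
      by (simp add: of_nat_nat) linarith
    have tq: "t \<le> q" using m2 unfolding q_def by (simp add: field_simps)
    have "q - t = (real (Suc m) - real (Suc n) * t) / real (Suc n)" unfolding q_def by (simp add: field_simps)
    also have "\<dots> \<le> 1 / real (Suc n)" using m1 by (intro divide_right_mono) auto
    finally have qt: "q - t \<le> 1 / real (Suc n)" .
    have qpos: "q > 0" unfolding q_def by simp
    have fq: "f q = q * f 1" unfolding q_def by (rule additive_rat[OF add])
    have "G (f t) = H t" using GH[OF t] t by (simp add: Fpos)
    moreover have "G (f q) = H q" using GH[OF qpos] qpos by (simp add: Fpos)
    ultimately have "\<bar>G (f t) - G (t * f 1)\<bar> \<le> \<bar>H t - H q\<bar> + \<bar>G (q * f 1) - G (t * f 1)\<bar>"
      using fq by (simp add: abs_triangle_ineq4[of "H t - H q" "G (q * f 1) - G (t * f 1)", simplified])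
    also have "\<dots> \<le> 2 * (q - t) + \<bar>q * f 1 - t * f 1\<bar>"
      using Hlip[OF tq] Glip[of "q * f 1" "t * f 1"] by linarith
    also have "\<bar>q * f 1 - t * f 1\<bar> = (q - t) * \<bar>f 1\<bar>"
      using tq by (simp add: left_diff_distrib[symmetric] abs_mult)
    also have "2 * (q - t) + (q - t) * \<bar>f 1\<bar> = (2 + \<bar>f 1\<bar>) * (q - t)" by (simp add: algebra_simps)
    also have "\<dots> \<le> (2 + \<bar>f 1\<bar>) * (1 / real (Suc n))"
      using qt by (intro mult_left_mono) auto
    finally show ?thesis by simp
  qed
  have "G (f t) = G (t * f 1)"
  proof (rule ccontr)
    assume ne: "G (f t) \<noteq> G (t * f 1)"
    define d where "d = \<bar>G (f t) - G (t * f 1)\<bar>"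
    have d: "d > 0" using ne unfolding d_def by simp
    obtain n where n: "inverse (real (Suc n)) < d / (2 + \<bar>f 1\<bar>)"
      using reals_Archimedean[of "d / (2 + \<bar>f 1\<bar>)"] d by (auto intro: divide_pos_pos)
    have "(2 + \<bar>f 1\<bar>) / real (Suc n) < d"
      using n by (simp add: field_simps)
    with approx[of n] show False unfolding d_def by simp
  qed
  then show ?thesis
    using Gmono[of "f t" "t * f 1"] Gmono[of "t * f 1" "f t"] by (cases "f t < t * f 1") (auto simp: not_less_iff_gr_or_eq)
qed


lemma l2_memI: "summable (\<lambda>n. (cmod (x n))\<^sup>2) \<Longrightarrow> x \<in> l2" unfolding l2_def by simp
lemma l2_memD: "x \<in> l2 \<Longrightarrow> summable (\<lambda>n. (cmod (x n))\<^sup>2)" unfolding l2_def by simp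

lemma l2_summable_prod:
  assumes "x \<in> l2" "y \<in> l2"
  shows "summable (\<lambda>n. cmod (x n) * cmod (y n))"
proof (rule summable_comparison_test')
  show "summable (\<lambda>n. (cmod (x n))\<^sup>2 + (cmod (y n))\<^sup>2)"
    using assms by (intro summable_add l2_memD)
  fix n :: nat
  have "2 * (cmod (x n) * cmod (y n)) \<le> (cmod (x n))\<^sup>2 + (cmod (y n))\<^sup>2"
    using sum_squares_bound[of "cmod (x n)" "cmod (y n)"] by (simp add: power2_eq_square)
  moreover have "0 \<le> cmod (x n) * cmod (y n)" by simp
  moreover have "norm (cmod (x n) * cmod (y n)) = cmod (x n) * cmod (y n)" by simp
  ultimately show "norm (cmod (x n) * cmod (y n)) \<le> (cmod (x n))\<^sup>2 + (cmod (y n))\<^sup>2"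
    by linarith
qed

lemma l2_summable_inner:
  assumes "x \<in> l2" "y \<in> l2"
  shows "summable (\<lambda>n. x n * cnj (y n))"
  by (rule summable_norm_cancel) (simp add: norm_mult l2_summable_prod[OF assms])

lemma l2_inner_sums:
  assumes "x \<in> l2" "y \<in> l2"
  shows "(\<lambda>n. x n * cnj (y n)) sums l2_inner x y"
  unfolding l2_inner_def using l2_summable_inner[OF assms] by (rule summable_sums)

lemma l2_zero_mem[simp]: "l2_zero \<in> l2"
  unfolding l2_def l2_zero_def by simp

lemma l2_scale_mem: "x \<in> l2 \<Longrightarrow> l2_scale c x \<in> l2"
  unfolding l2_def l2_scale_def by (simp add: norm_mult power_mult_distrib summable_mult)

lemma l2_add_mem:
  assumes "x \<in> l2" "y \<in> l2" shows "l2_add x y \<in> l2"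
proof (rule l2_memI, rule summable_comparison_test')
  show "summable (\<lambda>n. 2 * (cmod (x n))\<^sup>2 + 2 * (cmod (y n))\<^sup>2)"
    using assms by (intro summable_add summable_mult l2_memD)
  fix n :: nat
  have "cmod (x n + y n) \<le> cmod (x n) + cmod (y n)" by (rule norm_triangle_ineq)
  then have "(cmod (x n + y n))\<^sup>2 \<le> (cmod (x n) + cmod (y n))\<^sup>2"
    by (intro power_mono) auto
  also have "\<dots> \<le> 2 * (cmod (x n))\<^sup>2 + 2 * (cmod (y n))\<^sup>2"
    using sum_squares_bound[of "cmod (x n)" "cmod (y n)"] by (simp add: power2_eq_square algebra_simps)
  finally show "norm ((cmod (l2_add x y n))\<^sup>2) \<le> 2 * (cmod (x n))\<^sup>2 + 2 * (cmod (y n))\<^sup>2"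
    by (simp add: l2_add_def)
qed

lemma l2_diff_eq: "l2_diff x y = l2_add x (l2_scale (-1) y)"
  unfolding l2_diff_def l2_add_def l2_scale_def by auto

lemma l2_diff_mem: "x \<in> l2 \<Longrightarrow> y \<in> l2 \<Longrightarrow> l2_diff x y \<in> l2"
  unfolding l2_diff_eq by (intro l2_add_mem l2_scale_mem)

lemma l2_inner_add_left:
  assumes "x \<in> l2" "y \<in> l2" "z \<in> l2"
  shows "l2_inner (l2_add x y) z = l2_inner x z + l2_inner y z"
proof -
  have "(\<lambda>n. x n * cnj (z n) + y n * cnj (z n)) sums (l2_inner x z + l2_inner y z)"
    using assms by (intro sums_add l2_inner_sums)
  moreover have "l2_inner (l2_add x y) z = (\<Sum>n. x n * cnj (z n) + y n * cnj (z n))"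
    unfolding l2_inner_def l2_add_def by (simp add: distrib_right)
  ultimately show ?thesis by (metis sums_unique)
qed

lemma l2_inner_scale_left:
  assumes "x \<in> l2" "y \<in> l2"
  shows "l2_inner (l2_scale c x) y = c * l2_inner x y"
proof -
  have "(\<lambda>n. c * (x n * cnj (y n))) sums (c * l2_inner x y)"
    using assms by (intro sums_mult l2_inner_sums)
  moreover have "l2_inner (l2_scale c x) y = (\<Sum>n. c * (x n * cnj (y n)))"
    unfolding l2_inner_def l2_scale_def by (simp add: mult.assoc)
  ultimately show ?thesis by (metis sums_unique)
qed

lemma l2_inner_cnj:
  assumes "x \<in> l2" "y \<in> l2"
  shows "l2_inner y x = cnj (l2_inner x y)"
proof -
  have "(\<lambda>n. cnj (x n * cnj (y n))) sums cnj (l2_inner x y)"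
    using l2_inner_sums[OF assms] by (simp only: sums_cnj)
  then show ?thesis unfolding l2_inner_def[of y x]
    by (simp add: sums_unique[symmetric] mult.commute)
qed

lemma l2_inner_add_right:
  assumes "x \<in> l2" "y \<in> l2" "z \<in> l2"
  shows "l2_inner z (l2_add x y) = l2_inner z x + l2_inner z y"
  using assms l2_inner_add_left[OF assms] l2_inner_cnj l2_add_mem
  by (metis complex_cnj_add)

lemma l2_inner_scale_right:
  assumes "x \<in> l2" "y \<in> l2"
  shows "l2_inner y (l2_scale c x) = cnj c * l2_inner y x"
  using assms l2_inner_scale_left[OF assms] l2_inner_cnj l2_scale_mem
  by (metis complex_cnj_mult)

lemma l2_norm_sq: "x \<in> l2 \<Longrightarrow> (l2_norm x)\<^sup>2 = (\<Sum>n. (cmod (x n))\<^sup>2)"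
  unfolding l2_norm_def using suminf_nonneg[OF l2_memD[of x]] by simp

lemma l2_norm_nonneg: "x \<in> l2 \<Longrightarrow> l2_norm x \<ge> 0"
  unfolding l2_norm_def using suminf_nonneg[OF l2_memD[of x]] by simp

lemma l2_inner_self:
  assumes "x \<in> l2"
  shows "l2_inner x x = complex_of_real ((l2_norm x)\<^sup>2)"
proof -
  have "(\<lambda>n. complex_of_real ((cmod (x n))\<^sup>2)) sums complex_of_real (\<Sum>n. (cmod (x n))\<^sup>2)"
    using summable_sums[OF l2_memD[OF assms]] by (simp only: sums_of_real_iff)
  moreover have "(\<lambda>n. x n * cnj (x n)) = (\<lambda>n. complex_of_real ((cmod (x n))\<^sup>2))"
    by (rule ext) (rule complex_norm_square[symmetric])
  ultimately show ?thesis unfolding l2_inner_def l2_norm_sq[OF assms]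
    by (metis sums_unique)
qed

lemma l2_coord_le:
  assumes "x \<in> l2" shows "cmod (x n) \<le> l2_norm x"
proof -
  have "sum (\<lambda>n. (cmod (x n))\<^sup>2) {n} \<le> (\<Sum>n. (cmod (x n))\<^sup>2)"
    using l2_memD[OF assms] by (intro sum_le_suminf) auto
  then have "(cmod (x n))\<^sup>2 \<le> (l2_norm x)\<^sup>2" using l2_norm_sq[OF assms] by simp
  then show ?thesis using l2_norm_nonneg[OF assms] by (rule power2_le_imp_le)
qed

lemma l2_norm_eq_0:
  assumes "x \<in> l2" "l2_norm x = 0" shows "x = l2_zero"
proof -
  have "cmod (x n) = 0" for n using l2_coord_le[OF assms(1), of n] assms(2) by simp
  then show ?thesis unfolding l2_zero_def by auto
qed

lemma l2_inner_self_eq_0: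
  assumes "x \<in> l2" "l2_inner x x = 0" shows "x = l2_zero"
  using assms l2_inner_self[OF assms(1)] by (intro l2_norm_eq_0) auto


lemma l2_inner_expand:
  assumes x: "x \<in> l2" and y: "y \<in> l2"
  shows "l2_inner (l2_add x (l2_scale a y)) (l2_add x (l2_scale a y)) =
    l2_inner x x + cnj a * l2_inner x y + a * l2_inner y x + a * cnj a * l2_inner y y"
proof -
  have ay: "l2_scale a y \<in> l2" using y by (rule l2_scale_mem)
  have s: "l2_add x (l2_scale a y) \<in> l2" using x ay by (rule l2_add_mem)
  have "l2_inner (l2_add x (l2_scale a y)) (l2_add x (l2_scale a y))
     = l2_inner x (l2_add x (l2_scale a y)) + a * l2_inner y (l2_add x (l2_scale a y))"
    using x ay s y by (simp add: l2_inner_add_left l2_inner_scale_left)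
  also have "\<dots> = l2_inner x x + cnj a * l2_inner x y + a * (l2_inner y x + cnj a * l2_inner y y)"
    using x ay y by (simp add: l2_inner_add_right l2_inner_scale_right)
  finally show ?thesis by (simp add: algebra_simps)
qed

lemma l2_inner_unit_le:
  assumes x: "x \<in> l2" and u: "u \<in> l2" and uu: "l2_inner u u = 1"
  shows "cmod (l2_inner x u) \<le> l2_norm x"
proof -
  define c where "c = l2_inner x u"
  have ux: "l2_inner u x = cnj c" unfolding c_def using x u by (rule l2_inner_cnj)
  have "l2_inner (l2_add x (l2_scale (- c) u)) (l2_add x (l2_scale (- c) u))
      = l2_inner x x - c * cnj c"
    using l2_inner_expand[OF x u, of "-c"] ux uu unfolding c_def[symmetric] by simp
  also have "c * cnj c = complex_of_real ((cmod c)\<^sup>2)" by (rule complex_norm_square[symmetric])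
  finally have eq: "l2_inner (l2_add x (l2_scale (- c) u)) (l2_add x (l2_scale (- c) u))
      = complex_of_real ((l2_norm x)\<^sup>2 - (cmod c)\<^sup>2)"
    using l2_inner_self[OF x] by simp
  have "l2_add x (l2_scale (- c) u) \<in> l2" using x u by (intro l2_add_mem l2_scale_mem)
  from l2_inner_self[OF this] eq have "complex_of_real ((l2_norm (l2_add x (l2_scale (- c) u)))\<^sup>2) = complex_of_real ((l2_norm x)\<^sup>2 - (cmod c)\<^sup>2)"
    by metis
  then have "(l2_norm (l2_add x (l2_scale (- c) u)))\<^sup>2 = (l2_norm x)\<^sup>2 - (cmod c)\<^sup>2"
    by (simp only: of_real_eq_iff)
  then have "(cmod c)\<^sup>2 \<le> (l2_norm x)\<^sup>2" by (metis diff_ge_0_iff_ge zero_le_power2)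
  then show ?thesis unfolding c_def using l2_norm_nonneg[OF x] by (rule power2_le_imp_le)
qed

lemma l2_complete:
  assumes X: "\<And>k. X k \<in> l2"
    and C: "\<And>e. e > 0 \<Longrightarrow> \<exists>N. \<forall>m\<ge>N. \<forall>n\<ge>N. l2_norm (l2_diff (X m) (X n)) < e"
  defines "x \<equiv> (\<lambda>n. lim (\<lambda>k. X k n))"
  shows "x \<in> l2" and "(\<lambda>k. l2_norm (l2_diff (X k) x)) \<longlonglongrightarrow> 0"
    and "\<And>n. (\<lambda>k. X k n) \<longlonglongrightarrow> x n"
proof -
  have coord: "(\<lambda>k. X k j) \<longlonglongrightarrow> x j" for j
  proof -
    have "Cauchy (\<lambda>k. X k j)"
    proof (rule metric_CauchyI)
      fix e :: real assume "e > 0"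
      then obtain N where N: "\<forall>m\<ge>N. \<forall>n\<ge>N. l2_norm (l2_diff (X m) (X n)) < e" using C by blast
      have "dist (X m j) (X k j) < e" if "m \<ge> N" "k \<ge> N" for m k
      proof -
        have "l2_norm (l2_diff (X m) (X k)) < e" using N that by blast
        then show ?thesis using l2_coord_le[OF l2_diff_mem[OF X X], of m k j]
          by (simp add: dist_norm l2_diff_def)
      qed
      then show "\<exists>M. \<forall>m\<ge>M. \<forall>n\<ge>M. dist (X m j) (X n j) < e" by blast
    qed
    then show ?thesis unfolding x_def by (simp add: Cauchy_convergent_iff convergent_LIMSEQ_iff)
  qed
  then show "\<And>n. (\<lambda>k. X k n) \<longlonglongrightarrow> x n" .
  have main: "l2_diff (X k) x \<in> l2 \<and> l2_norm (l2_diff (X k) x) \<le> e"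
    if e: "e > 0" and N: "\<forall>m\<ge>N. \<forall>n\<ge>N. l2_norm (l2_diff (X m) (X n)) < e" and k: "k \<ge> N" for e N k
  proof -
    have ps: "(\<Sum>n<M. (cmod (l2_diff (X k) x n))\<^sup>2) \<le> e\<^sup>2" for M
    proof (rule LIMSEQ_le_const2)
      show "(\<lambda>m. \<Sum>n<M. (cmod (X k n - X m n))\<^sup>2) \<longlonglongrightarrow> (\<Sum>n<M. (cmod (l2_diff (X k) x n))\<^sup>2)"
        unfolding l2_diff_def by (intro tendsto_intros coord)
      show "\<exists>N'. \<forall>m\<ge>N'. (\<Sum>n<M. (cmod (X k n - X m n))\<^sup>2) \<le> e\<^sup>2"
      proof (intro exI allI impI)
        fix m assume m: "m \<ge> N"
        have dm: "l2_diff (X k) (X m) \<in> l2" by (rule l2_diff_mem[OF X X])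
        have "(\<Sum>n<M. (cmod (X k n - X m n))\<^sup>2) \<le> (\<Sum>n. (cmod (l2_diff (X k) (X m) n))\<^sup>2)"
          unfolding l2_diff_def using l2_memD[OF dm] unfolding l2_diff_def
          by (intro sum_le_suminf) auto
        also have "\<dots> = (l2_norm (l2_diff (X k) (X m)))\<^sup>2" using l2_norm_sq[OF dm] by simp
        also have "\<dots> \<le> e\<^sup>2"
        proof -
          have "l2_norm (l2_diff (X k) (X m)) < e" using N k m by blast
          then show ?thesis using l2_norm_nonneg[OF dm] by (intro power_mono) auto
        qed
        finally show "(\<Sum>n<M. (cmod (X k n - X m n))\<^sup>2) \<le> e\<^sup>2" .
      qed
    qed
    have sm: "summable (\<lambda>n. (cmod (l2_diff (X k) x n))\<^sup>2)"
      by (rule summableI_nonneg_bounded[OF _ ps]) simp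
    then have mem: "l2_diff (X k) x \<in> l2" by (rule l2_memI)
    have "(l2_norm (l2_diff (X k) x))\<^sup>2 \<le> e\<^sup>2"
      using l2_norm_sq[OF mem] suminf_le_const[OF sm ps] by simp
    then have "l2_norm (l2_diff (X k) x) \<le> e" using e by (simp add: power2_le_iff_abs_le)
    with mem show ?thesis by simp
  qed
  obtain N1 where N1: "\<forall>m\<ge>N1. \<forall>n\<ge>N1. l2_norm (l2_diff (X m) (X n)) < 1" using C[of 1] by auto
  have d1: "l2_diff (X N1) x \<in> l2" using main[OF _ N1] by auto
  have "x = l2_diff (X N1) (l2_diff (X N1) x)" unfolding l2_diff_def by auto
  then show xl: "x \<in> l2" using X d1 l2_diff_mem by metis
  show "(\<lambda>k. l2_norm (l2_diff (X k) x)) \<longlonglongrightarrow> 0"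
  proof (rule LIMSEQ_I)
    fix r :: real assume r: "r > 0"
    obtain N where N: "\<forall>m\<ge>N. \<forall>n\<ge>N. l2_norm (l2_diff (X m) (X n)) < r / 2" using C[of "r/2"] r by auto
    have "norm (l2_norm (l2_diff (X k) x) - 0) < r" if "k \<ge> N" for k
      using main[OF _ N that] r l2_norm_nonneg[OF l2_diff_mem[OF X xl]] by simp
    then show "\<exists>no. \<forall>n\<ge>no. norm (l2_norm (l2_diff (X n) x) - 0) < r" by blast
  qed
qed


lemma l2_lincomb:
  fixes m :: nat and g :: "nat \<Rightarrow> l2vec" and c :: "nat \<Rightarrow> complex"
  assumes g: "\<And>i. i < m \<Longrightarrow> g i \<in> l2" and d: "d \<in> l2"
  shows "(\<lambda>k. \<Sum>i<m. c i * g i k) \<in> l2 \<and>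
         l2_inner (\<lambda>k. \<Sum>i<m. c i * g i k) d = (\<Sum>i<m. c i * l2_inner (g i) d)"
  using g
proof (induction m)
  case 0
  have "l2_inner l2_zero d = 0" unfolding l2_inner_def l2_zero_def by simp
  then show ?case by (simp add: l2_zero_def[symmetric])
next
  case (Suc m)
  define s where "s = (\<lambda>k. \<Sum>i<m. c i * g i k)"
  have IH: "s \<in> l2" "l2_inner s d = (\<Sum>i<m. c i * l2_inner (g i) d)"
    using Suc by (auto simp: s_def)
  have gm: "g m \<in> l2" using Suc.prems by simp
  have eq: "(\<lambda>k. \<Sum>i<Suc m. c i * g i k) = l2_add s (l2_scale (c m) (g m))"
    unfolding s_def l2_add_def l2_scale_def by simp
  show ?case unfolding eq using IH gm d
    by (simp add: l2_add_mem l2_scale_mem l2_inner_add_left l2_inner_scale_left)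
qed

lemma l2_ortho_dense_zero:
  assumes dS: "d \<in> S" and Sl2: "S \<subseteq> l2" and Gl2: "G \<subseteq> l2" and dense: "l2_span_dense G S"
    and orth: "\<And>g. g \<in> G \<Longrightarrow> l2_inner g d = 0"
  shows "d = l2_zero"
proof -
  have d: "d \<in> l2" using dS Sl2 by auto
  have "l2_norm d \<le> e" if e: "e > 0" for e
  proof -
    obtain m :: nat and c :: "nat \<Rightarrow> complex" and g :: "nat \<Rightarrow> l2vec" where gG: "\<forall>i<m. g i \<in> G" and lt: "l2_norm (\<lambda>k. d k - (\<Sum>i<m. c i * g i k)) < e"
      using dense dS e unfolding l2_span_dense_def by blast
    define s where "s = (\<lambda>k. \<Sum>i<m. c i * g i k)"
    have gl: "\<And>i. i < m \<Longrightarrow> g i \<in> l2" using gG Gl2 by auto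
    from l2_lincomb[OF gl d, where c=c] have s: "s \<in> l2" and sd: "l2_inner s d = 0"
      using orth gG unfolding s_def by auto
    have ds: "l2_inner d s = 0" using l2_inner_cnj[OF s d] sd by simp
    have eq: "(\<lambda>k. d k - s k) = l2_add d (l2_scale (-1) s)"
      unfolding l2_add_def l2_scale_def by auto
    have mem: "l2_add d (l2_scale (-1) s) \<in> l2" using d s by (intro l2_add_mem l2_scale_mem)
    have "l2_inner (l2_add d (l2_scale (-1) s)) (l2_add d (l2_scale (-1) s)) = l2_inner d d + l2_inner s s"
      using l2_inner_expand[OF d s, of "-1"] ds sd by simp
    then have "complex_of_real ((l2_norm (l2_add d (l2_scale (-1) s)))\<^sup>2) =
        complex_of_real ((l2_norm d)\<^sup>2 + (l2_norm s)\<^sup>2)"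
      using l2_inner_self[OF mem] l2_inner_self[OF d] l2_inner_self[OF s] by simp
    then have "(l2_norm (l2_add d (l2_scale (-1) s)))\<^sup>2 = (l2_norm d)\<^sup>2 + (l2_norm s)\<^sup>2"
      by (simp only: of_real_eq_iff)
    then have "(l2_norm d)\<^sup>2 \<le> (l2_norm (l2_add d (l2_scale (-1) s)))\<^sup>2" by simp
    then have "l2_norm d \<le> l2_norm (l2_add d (l2_scale (-1) s))"
      using l2_norm_nonneg[OF mem] by (rule power2_le_imp_le)
    also have "\<dots> < e"
    proof -
      have eq2: "(\<lambda>k. d k - (\<Sum>i<m. c i * g i k)) = l2_add d (l2_scale (-1) s)"
        unfolding s_def l2_add_def l2_scale_def by auto
      show ?thesis using lt unfolding eq2 .
    qed
    finally show ?thesis by simp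
  qed
  then have "l2_norm d \<le> 0" by (rule field_le_epsilon[where x="l2_norm d" and y=0, simplified])
  then have "l2_norm d = 0" using l2_norm_nonneg[OF d] by simp
  then show ?thesis using d l2_norm_eq_0 by blast
qed

locale psys =
  fixes E :: "real \<Rightarrow> l2vec set"
    and pm :: "real \<Rightarrow> real \<Rightarrow> l2vec \<Rightarrow> l2vec \<Rightarrow> l2vec"
    and u :: "real \<Rightarrow> l2vec"
  assumes PS: "product_system E pm" and NU: "normalized_unit E pm u"
begin

lemma E_cs: "t > 0 \<Longrightarrow> l2_closed_subspace (E t)"
  using conjunct1[OF PS[unfolded product_system_def]] by blast

lemma E_l2: "t > 0 \<Longrightarrow> x \<in> E t \<Longrightarrow> x \<in> l2"
  using conjunct1[OF E_cs[unfolded l2_closed_subspace_def]] by blast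

lemma E_zero: "t > 0 \<Longrightarrow> l2_zero \<in> E t"
  using conjunct1[OF conjunct2[OF E_cs[unfolded l2_closed_subspace_def]]] by blast

lemma E_add: "t > 0 \<Longrightarrow> x \<in> E t \<Longrightarrow> y \<in> E t \<Longrightarrow> l2_add x y \<in> E t"
  using conjunct1[OF conjunct2[OF conjunct2[OF E_cs[unfolded l2_closed_subspace_def]]]] by blast

lemma E_scale: "t > 0 \<Longrightarrow> x \<in> E t \<Longrightarrow> l2_scale c x \<in> E t"
  using conjunct1[OF conjunct2[OF conjunct2[OF conjunct2[OF E_cs[unfolded l2_closed_subspace_def]]]]] by blast

lemma E_diff: "t > 0 \<Longrightarrow> x \<in> E t \<Longrightarrow> y \<in> E t \<Longrightarrow> l2_diff x y \<in> E t"
  unfolding l2_diff_eq by (intro E_add E_scale)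

lemma E_closed: "t > 0 \<Longrightarrow> (\<And>k. X k \<in> E t) \<Longrightarrow> x \<in> l2 \<Longrightarrow>
    (\<lambda>k. l2_norm (l2_diff (X k) x)) \<longlonglongrightarrow> 0 \<Longrightarrow> x \<in> E t"
  using conjunct2[OF conjunct2[OF conjunct2[OF conjunct2[OF E_cs[unfolded l2_closed_subspace_def]]]]] by blast

lemma pm_mem: "s > 0 \<Longrightarrow> t > 0 \<Longrightarrow> x \<in> E s \<Longrightarrow> y \<in> E t \<Longrightarrow> pm s t x y \<in> E (s + t)"
  using conjunct1[OF conjunct2[OF PS[unfolded product_system_def]]] by blast

lemma pm_inner: "s > 0 \<Longrightarrow> t > 0 \<Longrightarrow> x \<in> E s \<Longrightarrow> x' \<in> E s \<Longrightarrow> y \<in> E t \<Longrightarrow> y' \<in> E t \<Longrightarrow>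
    l2_inner (pm s t x y) (pm s t x' y') = l2_inner x x' * l2_inner y y'"
  using conjunct1[OF conjunct2[OF conjunct2[OF conjunct2[OF PS[unfolded product_system_def]]]]] by blast

lemma pm_dense: "s > 0 \<Longrightarrow> t > 0 \<Longrightarrow> l2_span_dense {pm s t x y |x y. x \<in> E s \<and> y \<in> E t} (E (s + t))"
  using conjunct1[OF conjunct2[OF conjunct2[OF conjunct2[OF conjunct2[OF PS[unfolded product_system_def]]]]]] by blast

lemma pm_ext:
  assumes st: "s > 0" "t > 0" and A: "A \<in> E (s + t)" and B: "B \<in> E (s + t)"
    and eq: "\<And>z w. z \<in> E s \<Longrightarrow> w \<in> E t \<Longrightarrow> l2_inner A (pm s t z w) = l2_inner B (pm s t z w)"
  shows "A = B"
proof -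
  have st': "s + t > 0" using st by simp
  define d where "d = l2_diff A B"
  have dE: "d \<in> E (s + t)" unfolding d_def using st' A B by (rule E_diff)
  have "d = l2_zero"
  proof (rule l2_ortho_dense_zero[OF dE _ _ pm_dense[OF st]])
    show "E (s + t) \<subseteq> l2" using E_l2[OF st'] by blast
    show "{pm s t x y |x y. x \<in> E s \<and> y \<in> E t} \<subseteq> l2"
      using E_l2[OF st'] pm_mem[OF st] by blast
    fix g assume "g \<in> {pm s t x y |x y. x \<in> E s \<and> y \<in> E t}"
    then obtain z w where g: "g = pm s t z w" and z: "z \<in> E s" and w: "w \<in> E t" by blast
    have gl: "g \<in> l2" using g pm_mem[OF st z w] E_l2[OF st'] by simp
    have Al: "A \<in> l2" and Bl: "B \<in> l2" using A B E_l2[OF st'] by auto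
    have "l2_inner d g = l2_inner A g + (-1) * l2_inner B g"
      unfolding d_def l2_diff_eq using Al Bl gl
      by (simp add: l2_inner_add_left l2_inner_scale_left l2_scale_mem)
    also have "\<dots> = 0" using eq[OF z w] g by simp
    finally have "l2_inner d g = 0" .
    moreover have "d \<in> l2" using dE E_l2[OF st'] by simp
    ultimately show "l2_inner g d = 0" using l2_inner_cnj[OF _ gl, of d] by simp
  qed
  then have "\<forall>n. A n - B n = 0" unfolding d_def l2_diff_def l2_zero_def by (simp add: fun_eq_iff)
  then show ?thesis by (simp add: fun_eq_iff)
qed

lemma pm_add_left:
  assumes st: "s > 0" "t > 0" and x: "x \<in> E s" and x': "x' \<in> E s" and y: "y \<in> E t"
  shows "pm s t (l2_add x x') y = l2_add (pm s t x y) (pm s t x' y)"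
proof (rule pm_ext[OF st])
  have st': "s + t > 0" using st by simp
  show "pm s t (l2_add x x') y \<in> E (s + t)" using st x x' y by (intro pm_mem E_add)
  show "l2_add (pm s t x y) (pm s t x' y) \<in> E (s + t)" using st st' x x' y by (intro pm_mem E_add)
  fix z w assume z: "z \<in> E s" and w: "w \<in> E t"
  have l: "\<And>v. v \<in> E s \<Longrightarrow> v \<in> l2" using E_l2[OF st(1)] by blast
  have l': "\<And>v. v \<in> E (s+t) \<Longrightarrow> v \<in> l2" using E_l2[OF st'] by blast
  show "l2_inner (pm s t (l2_add x x') y) (pm s t z w) = l2_inner (l2_add (pm s t x y) (pm s t x' y)) (pm s t z w)"
    using st x x' y z w E_add[OF st(1) x x']
    by (simp add: pm_inner l2_inner_add_left l l' pm_mem distrib_right)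
qed

lemma pm_scale_left:
  assumes st: "s > 0" "t > 0" and x: "x \<in> E s" and y: "y \<in> E t"
  shows "pm s t (l2_scale c x) y = l2_scale c (pm s t x y)"
proof (rule pm_ext[OF st])
  have st': "s + t > 0" using st by simp
  show "pm s t (l2_scale c x) y \<in> E (s + t)" using st x y by (intro pm_mem E_scale)
  show "l2_scale c (pm s t x y) \<in> E (s + t)" using st st' x y by (intro pm_mem E_scale)
  fix z w assume z: "z \<in> E s" and w: "w \<in> E t"
  have l: "\<And>v. v \<in> E s \<Longrightarrow> v \<in> l2" using E_l2[OF st(1)] by blast
  have l': "\<And>v. v \<in> E (s+t) \<Longrightarrow> v \<in> l2" using E_l2[OF st'] by blast
  show "l2_inner (pm s t (l2_scale c x) y) (pm s t z w) = l2_inner (l2_scale c (pm s t x y)) (pm s t z w)"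
    using st x y z w E_scale[OF st(1) x]
    by (simp add: pm_inner l2_inner_scale_left l l' pm_mem)
qed

lemma pm_add_right:
  assumes st: "s > 0" "t > 0" and x: "x \<in> E s" and y: "y \<in> E t" and y': "y' \<in> E t"
  shows "pm s t x (l2_add y y') = l2_add (pm s t x y) (pm s t x y')"
proof (rule pm_ext[OF st])
  have st': "s + t > 0" using st by simp
  show "pm s t x (l2_add y y') \<in> E (s + t)" using st x y y' by (intro pm_mem E_add)
  show "l2_add (pm s t x y) (pm s t x y') \<in> E (s + t)" using st st' x y y' by (intro pm_mem E_add)
  fix z w assume z: "z \<in> E s" and w: "w \<in> E t"
  have l: "\<And>v. v \<in> E t \<Longrightarrow> v \<in> l2" using E_l2[OF st(2)] by blast
  have l': "\<And>v. v \<in> E (s+t) \<Longrightarrow> v \<in> l2" using E_l2[OF st'] by blast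
  show "l2_inner (pm s t x (l2_add y y')) (pm s t z w) = l2_inner (l2_add (pm s t x y) (pm s t x y')) (pm s t z w)"
    using st x y y' z w E_add[OF st(2) y y']
    by (simp add: pm_inner l2_inner_add_left l l' pm_mem distrib_left)
qed

lemma pm_scale_right:
  assumes st: "s > 0" "t > 0" and x: "x \<in> E s" and y: "y \<in> E t"
  shows "pm s t x (l2_scale c y) = l2_scale c (pm s t x y)"
proof (rule pm_ext[OF st])
  have st': "s + t > 0" using st by simp
  show "pm s t x (l2_scale c y) \<in> E (s + t)" using st x y by (intro pm_mem E_scale)
  show "l2_scale c (pm s t x y) \<in> E (s + t)" using st st' x y by (intro pm_mem E_scale)
  fix z w assume z: "z \<in> E s" and w: "w \<in> E t"
  have l: "\<And>v. v \<in> E t \<Longrightarrow> v \<in> l2" using E_l2[OF st(2)] by blast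
  have l': "\<And>v. v \<in> E (s+t) \<Longrightarrow> v \<in> l2" using E_l2[OF st'] by blast
  show "l2_inner (pm s t x (l2_scale c y)) (pm s t z w) = l2_inner (l2_scale c (pm s t x y)) (pm s t z w)"
    using st x y z w E_scale[OF st(2) y]
    by (simp add: pm_inner l2_inner_scale_left l l' pm_mem mult.assoc)
qed

lemma l2_scale_0: "l2_scale 0 x = l2_zero" unfolding l2_scale_def l2_zero_def by simp

lemma pm_zero_left: "s > 0 \<Longrightarrow> t > 0 \<Longrightarrow> y \<in> E t \<Longrightarrow> pm s t l2_zero y = l2_zero"
  using pm_scale_left[of s t l2_zero y 0] E_zero[of s] by (simp add: l2_scale_0)

lemma pm_zero_right: "s > 0 \<Longrightarrow> t > 0 \<Longrightarrow> x \<in> E s \<Longrightarrow> pm s t x l2_zero = l2_zero"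
  using pm_scale_right[of s t x l2_zero 0] E_zero[of t] by (simp add: l2_scale_0)

lemma u_unit: "ps_unit E pm u" using NU unfolding normalized_unit_def by blast
lemma u_mem: "t > 0 \<Longrightarrow> u t \<in> E t"
  using u_unit unfolding ps_unit_def meas_section_def by blast
lemma u_l2: "t > 0 \<Longrightarrow> u t \<in> l2" using u_mem E_l2 by blast
lemma u_mult: "s > 0 \<Longrightarrow> t > 0 \<Longrightarrow> u (s + t) = pm s t (u s) (u t)"
  using u_unit unfolding ps_unit_def by blast
lemma u_meas: "meas_section E u" using u_unit unfolding ps_unit_def by blast
lemma u_inner: "t > 0 \<Longrightarrow> l2_inner (u t) (u t) = 1"
  using NU l2_inner_self[OF u_l2] unfolding normalized_unit_def by simp

end


lemma borel_measurable_cnj [measurable]: "cnj \<in> borel_measurable borel"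
  by (intro borel_measurable_continuous_onI continuous_intros)

lemma additive_measurable_linear_complex:
  fixes f :: "real \<Rightarrow> complex"
  assumes meas: "f \<in> borel_measurable (restrict_space borel {0<..})"
    and add: "\<And>s t. s>0 \<Longrightarrow> t>0 \<Longrightarrow> f (s+t) = f s + f t"
    and t: "t > 0"
  shows "f t = complex_of_real t * f 1"
proof -
  have mre: "(\<lambda>x. Re (f x)) \<in> borel_measurable (restrict_space borel {0<..})"
    using meas by measurable
  have mim: "(\<lambda>x. Im (f x)) \<in> borel_measurable (restrict_space borel {0<..})"
    using meas by measurable
  have re: "Re (f t) = t * Re (f 1)"
    by (rule additive_measurable_linear[OF mre _ t]) (simp add: add)
  have im: "Im (f t) = t * Im (f 1)"
    by (rule additive_measurable_linear[OF mim _ t]) (simp add: add)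
  show ?thesis using re im by (simp add: complex_eq_iff)
qed

context psys
begin

lemma space_R: "space (restrict_space borel ({0<..} :: real set)) = {0<..}"
  by (simp add: space_restrict_space)

lemma inner_meas:
  assumes a: "meas_section E a" and b: "meas_section E b"
  shows "(\<lambda>t. l2_inner (a t) (b t)) \<in> borel_measurable (restrict_space borel {0<..})"
proof (rule borel_measurable_LIMSEQ_metric)
  have am[measurable]: "(\<lambda>t. a t n) \<in> borel_measurable (restrict_space borel {0<..})" for n
    using a unfolding meas_section_def by blast
  have bm[measurable]: "(\<lambda>t. b t n) \<in> borel_measurable (restrict_space borel {0<..})" for n
    using b unfolding meas_section_def by blast
  show "(\<lambda>t. \<Sum>n<i. a t n * cnj (b t n)) \<in> borel_measurable (restrict_space borel {0<..})" for i
    by measurable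
  fix t assume "t \<in> space (restrict_space borel ({0<..} :: real set))"
  then have t: "t > 0" by (simp add: space_R)
  have "a t \<in> l2" "b t \<in> l2" using a b t E_l2 unfolding meas_section_def by blast+
  from l2_inner_sums[OF this] show "(\<lambda>i. \<Sum>n<i. a t n * cnj (b t n)) \<longlonglongrightarrow> l2_inner (a t) (b t)"
    by (simp add: sums_def)
qed

abbreviation "V \<equiv> add_units E pm u"

lemma au_meas: "a \<in> V \<Longrightarrow> meas_section E a"
  unfolding add_units_def additive_unit_def by blast
lemma au_mem: "a \<in> V \<Longrightarrow> t > 0 \<Longrightarrow> a t \<in> E t"
  using au_meas unfolding meas_section_def by blast
lemma au_l2: "a \<in> V \<Longrightarrow> t > 0 \<Longrightarrow> a t \<in> l2"
  using au_mem E_l2 by blast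
lemma au_neg: "a \<in> V \<Longrightarrow> t \<le> 0 \<Longrightarrow> a t = l2_zero"
  unfolding add_units_def additive_unit_def by blast
lemma au_add: "a \<in> V \<Longrightarrow> s > 0 \<Longrightarrow> t > 0 \<Longrightarrow> a (s + t) = l2_add (pm s t (a s) (u t)) (pm s t (u s) (a t))"
  unfolding add_units_def additive_unit_def by blast

lemma au_inner_u:
  assumes a: "a \<in> V" and t: "t > 0"
  shows "l2_inner (a t) (u t) = complex_of_real t * l2_inner (a 1) (u 1)"
proof (rule additive_measurable_linear_complex[OF inner_meas[OF au_meas[OF a] u_meas] _ t])
  fix s t :: real assume s: "s > 0" and t: "t > 0"
  have st: "s + t > 0" using s t by simp
  have l: "\<And>v. v \<in> E (s+t) \<Longrightarrow> v \<in> l2" using E_l2[OF st] by blast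
  show "l2_inner (a (s + t)) (u (s + t)) = l2_inner (a s) (u s) + l2_inner (a t) (u t)"
    using s t au_mem[OF a s] au_mem[OF a t] u_mem[OF s] u_mem[OF t]
    by (simp add: au_add[OF a s t] u_mult[OF s t] l2_inner_add_left l pm_mem pm_inner u_inner)
qed

lemma root_au: "r \<in> roots E pm u \<Longrightarrow> r \<in> V"
  unfolding roots_def root_def add_units_def by blast
lemma root_orth: "r \<in> roots E pm u \<Longrightarrow> t > 0 \<Longrightarrow> l2_inner (r t) (u t) = 0"
  unfolding roots_def root_def by blast

lemma root_norm:
  assumes r: "r \<in> roots E pm u" and t: "t > 0"
  shows "(l2_norm (r t))\<^sup>2 = t * (l2_norm (r 1))\<^sup>2"
proof -
  have rV: "r \<in> V" using r by (rule root_au)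
  have eq: "(l2_norm (r t))\<^sup>2 = Re (l2_inner (r t) (r t))" if "t > 0" for t
    using l2_inner_self[OF au_l2[OF rV that]] by simp
  have "Re (l2_inner (r t) (r t)) = t * Re (l2_inner (r 1) (r 1))"
  proof (rule additive_measurable_linear[OF _ _ t])
    show "(\<lambda>t. Re (l2_inner (r t) (r t))) \<in> borel_measurable (restrict_space borel {0<..})"
      using inner_meas[OF au_meas[OF rV] au_meas[OF rV]] by measurable
    fix s t :: real assume s: "s > 0" and t: "t > 0"
    have st: "s + t > 0" using s t by simp
    have l: "\<And>v. v \<in> E (s+t) \<Longrightarrow> v \<in> l2" using E_l2[OF st] by blast
    have ls: "\<And>v. v \<in> E s \<Longrightarrow> v \<in> l2" using E_l2[OF s] by blast
    have lt: "\<And>v. v \<in> E t \<Longrightarrow> v \<in> l2" using E_l2[OF t] by blast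
    have o1: "l2_inner (u s) (r s) = 0" using l2_inner_cnj[OF au_l2[OF rV s] u_l2[OF s]] root_orth[OF r s] by simp
    have o2: "l2_inner (u t) (r t) = 0" using l2_inner_cnj[OF au_l2[OF rV t] u_l2[OF t]] root_orth[OF r t] by simp
    have "l2_inner (r (s + t)) (r (s + t)) = l2_inner (r s) (r s) + l2_inner (r t) (r t)"
      using s t au_mem[OF rV s] au_mem[OF rV t] u_mem[OF s] u_mem[OF t] root_orth[OF r s] root_orth[OF r t] o1 o2
      by (simp add: au_add[OF rV s t] l2_inner_add_left l2_inner_add_right l pm_mem pm_inner u_inner l2_add_mem)
    then show "Re (l2_inner (r (s + t)) (r (s + t))) = Re (l2_inner (r s) (r s)) + Re (l2_inner (r t) (r t))"
      by simp
  qed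
  then show ?thesis using eq[OF t] eq[of 1] by simp
qed

end


context psys
begin

definition a0 :: "real \<Rightarrow> l2vec" where
  "a0 t = (if 0 < t then l2_scale (complex_of_real t) (u t) else l2_zero)"

lemma u_coord_meas[measurable]: "(\<lambda>t. u t n) \<in> borel_measurable (restrict_space borel {0<..})"
  using u_meas unfolding meas_section_def by blast

lemma a0_V: "a0 \<in> V"
  unfolding add_units_def additive_unit_def meas_section_def
proof (intro CollectI conjI allI impI)
  fix t :: real assume "t > 0"
  then show "a0 t \<in> E t" unfolding a0_def using u_mem by (simp add: E_scale)
next
  fix n
  have "(\<lambda>t. complex_of_real t * u t n) \<in> borel_measurable (restrict_space borel {0<..})"
    by (intro borel_measurable_times measurable_restrict_space1 borel_measurable_of_real u_coord_meas)
  then show "(\<lambda>t. a0 t n) \<in> borel_measurable (restrict_space borel {0<..})"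
    by (rule measurable_cong[THEN iffD1, rotated]) (simp add: a0_def space_R l2_scale_def)
next
  fix t :: real assume "t \<le> 0" then show "a0 t = l2_zero" unfolding a0_def by simp
next
  fix s t :: real assume s: "s > 0" and t: "t > 0"
  define P where "P = pm s t (u s) (u t)"
  have "pm s t (a0 s) (u t) = l2_scale (complex_of_real s) P"
    unfolding a0_def P_def using s t u_mem by (simp add: pm_scale_left)
  moreover have "pm s t (u s) (a0 t) = l2_scale (complex_of_real t) P"
    unfolding a0_def P_def using s t u_mem by (simp add: pm_scale_right)
  moreover have "a0 (s + t) = l2_scale (complex_of_real (s + t)) P"
    unfolding a0_def P_def using s t by (simp add: u_mult)
  ultimately show "a0 (s + t) = l2_add (pm s t (a0 s) (u t)) (pm s t (u s) (a0 t))"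
    by (simp add: l2_add_def l2_scale_def distrib_right)
qed

lemma sec_add_V:
  assumes a: "a \<in> V" and b: "b \<in> V" shows "sec_add a b \<in> V"
  unfolding add_units_def additive_unit_def meas_section_def
proof (intro CollectI conjI allI impI)
  fix t :: real assume t: "t > 0"
  then show "sec_add a b t \<in> E t" unfolding sec_add_def using au_mem[OF a t] au_mem[OF b t] by (simp add: E_add)
next
  fix n
  have [measurable]: "(\<lambda>t. a t n) \<in> borel_measurable (restrict_space borel {0<..})"
    "(\<lambda>t. b t n) \<in> borel_measurable (restrict_space borel {0<..})"
    using au_meas[OF a] au_meas[OF b] unfolding meas_section_def by blast+
  show "(\<lambda>t. sec_add a b t n) \<in> borel_measurable (restrict_space borel {0<..})"
    unfolding sec_add_def l2_add_def by measurable
next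
  fix t :: real assume "t \<le> 0" then show "sec_add a b t = l2_zero"
    unfolding sec_add_def using au_neg[OF a] au_neg[OF b] by (simp add: l2_add_def l2_zero_def)
next
  fix s t :: real assume s: "s > 0" and t: "t > 0"
  show "sec_add a b (s + t) = l2_add (pm s t (sec_add a b s) (u t)) (pm s t (u s) (sec_add a b t))"
    unfolding sec_add_def
    using s t au_mem[OF a s] au_mem[OF b s] au_mem[OF a t] au_mem[OF b t] u_mem[OF s] u_mem[OF t]
    by (simp add: au_add[OF a s t] au_add[OF b s t] pm_add_left pm_add_right)
       (simp add: l2_add_def algebra_simps)
qed

lemma sec_scale_V:
  assumes a: "a \<in> V" shows "sec_scale c a \<in> V"
  unfolding add_units_def additive_unit_def meas_section_def
proof (intro CollectI conjI allI impI)
  fix t :: real assume t: "t > 0"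
  then show "sec_scale c a t \<in> E t" unfolding sec_scale_def using au_mem[OF a t] by (simp add: E_scale)
next
  fix n
  have [measurable]: "(\<lambda>t. a t n) \<in> borel_measurable (restrict_space borel {0<..})"
    using au_meas[OF a] unfolding meas_section_def by blast+
  show "(\<lambda>t. sec_scale c a t n) \<in> borel_measurable (restrict_space borel {0<..})"
    unfolding sec_scale_def l2_scale_def by measurable
next
  fix t :: real assume "t \<le> 0" then show "sec_scale c a t = l2_zero"
    unfolding sec_scale_def using au_neg[OF a] by (simp add: l2_scale_def l2_zero_def)
next
  fix s t :: real assume s: "s > 0" and t: "t > 0"
  show "sec_scale c a (s + t) = l2_add (pm s t (sec_scale c a s) (u t)) (pm s t (u s) (sec_scale c a t))"
    unfolding sec_scale_def
    using s t au_mem[OF a s] au_mem[OF a t] u_mem[OF s] u_mem[OF t]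
    by (simp add: au_add[OF a s t] pm_scale_left pm_scale_right)
       (simp add: l2_add_def l2_scale_def algebra_simps)
qed

lemma sec_zero_V: "sec_zero \<in> V"
proof -
  have "sec_scale 0 a0 = sec_zero"
    unfolding sec_scale_def sec_zero_def l2_scale_def l2_zero_def by simp
  then show ?thesis using sec_scale_V[OF a0_V, of 0] by simp
qed

definition rt :: "(real \<Rightarrow> l2vec) \<Rightarrow> real \<Rightarrow> l2vec" where
  "rt a = sec_add a (sec_scale (- l2_inner (a 1) (u 1)) a0)"

lemma rt_root:
  assumes a: "a \<in> V" shows "rt a \<in> roots E pm u"
proof -
  define c where "c = l2_inner (a 1) (u 1)"
  have V: "rt a \<in> V" unfolding rt_def by (intro sec_add_V sec_scale_V a a0_V)
  have "l2_inner (rt a t) (u t) = 0" if t: "t > 0" for t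
  proof -
    have "rt a t = l2_add (a t) (l2_scale (- c) (l2_scale (complex_of_real t) (u t)))"
      unfolding rt_def c_def sec_add_def sec_scale_def a0_def using t by simp
    then show ?thesis using au_l2[OF a t] u_l2[OF t] au_inner_u[OF a t] u_inner[OF t]
      by (simp add: l2_inner_add_left l2_inner_scale_left l2_scale_mem c_def)
  qed
  then show ?thesis using V unfolding roots_def root_def add_units_def by blast
qed

lemma au_norm_formula:
  assumes a: "a \<in> V" and t: "t > 0"
  shows "(l2_norm (a t))\<^sup>2 = t * (l2_norm (rt a 1))\<^sup>2 + t\<^sup>2 * (cmod (l2_inner (a 1) (u 1)))\<^sup>2"
proof -
  define c where "c = l2_inner (a 1) (u 1)"
  have r: "rt a \<in> roots E pm u" using a by (rule rt_root)
  have rV: "rt a \<in> V" using r by (rule root_au)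
  have rl: "rt a t \<in> l2" using au_l2[OF rV t] .
  have ul: "u t \<in> l2" using u_l2[OF t] .
  have eq: "a t = l2_add (rt a t) (l2_scale (c * complex_of_real t) (u t))"
    unfolding rt_def c_def sec_add_def sec_scale_def a0_def using t
    by (simp add: l2_add_def l2_scale_def fun_eq_iff algebra_simps)
  have ru: "l2_inner (rt a t) (u t) = 0" using root_orth[OF r t] .
  have ur: "l2_inner (u t) (rt a t) = 0" using l2_inner_cnj[OF rl ul] ru by simp
  have "l2_inner (a t) (a t) = l2_inner (rt a t) (rt a t) + (c * complex_of_real t) * cnj (c * complex_of_real t)"
    unfolding eq using l2_inner_expand[OF rl ul, of "c * complex_of_real t"] ru ur u_inner[OF t] by simp
  also have "(c * complex_of_real t) * cnj (c * complex_of_real t) = complex_of_real ((cmod (c * complex_of_real t))\<^sup>2)"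
    by (rule complex_norm_square[symmetric])
  finally have "complex_of_real ((l2_norm (a t))\<^sup>2) = complex_of_real ((l2_norm (rt a t))\<^sup>2 + (cmod (c * complex_of_real t))\<^sup>2)"
    using l2_inner_self[OF au_l2[OF a t]] l2_inner_self[OF rl] by simp
  then have "(l2_norm (a t))\<^sup>2 = (l2_norm (rt a t))\<^sup>2 + (cmod (c * complex_of_real t))\<^sup>2"
    by (simp only: of_real_eq_iff)
  also have "(cmod (c * complex_of_real t))\<^sup>2 = t\<^sup>2 * (cmod c)\<^sup>2"
    using t by (simp add: norm_mult power_mult_distrib)
  also have "(l2_norm (rt a t))\<^sup>2 = t * (l2_norm (rt a 1))\<^sup>2" using root_norm[OF r t] .
  finally show ?thesis unfolding c_def .
qed

lemma au_norm_bound: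
  assumes a: "a \<in> V" and t: "t > 0"
  shows "(l2_norm (a t))\<^sup>2 \<le> (t + t\<^sup>2) * (l2_norm (a 1))\<^sup>2"
proof -
  define A where "A = (l2_norm (rt a 1))\<^sup>2"
  define B where "B = (cmod (l2_inner (a 1) (u 1)))\<^sup>2"
  have A: "A \<ge> 0" "B \<ge> 0" unfolding A_def B_def by simp_all
  have "(l2_norm (a t))\<^sup>2 = t * A + t\<^sup>2 * B" unfolding A_def B_def by (rule au_norm_formula[OF a t])
  moreover have "(l2_norm (a 1))\<^sup>2 = A + B" unfolding A_def B_def using au_norm_formula[OF a, of 1] by simp
  moreover have "t * A + t\<^sup>2 * B \<le> (t + t\<^sup>2) * (A + B)"
    using A t by (simp add: algebra_simps)
  ultimately show ?thesis by simp
qed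

lemma au_zero:
  assumes a: "a \<in> V" and z: "l2_inner (a 1) (a 1) = 0"
  shows "a = sec_zero"
proof
  fix t
  show "a t = sec_zero t"
  proof (cases "t > 0")
    case True
    have "(l2_norm (a 1))\<^sup>2 = 0" using l2_inner_self[OF au_l2[OF a, of 1]] z by simp
    then have "(l2_norm (a t))\<^sup>2 \<le> 0" using au_norm_bound[OF a True] by simp
    then have "l2_norm (a t) = 0" by simp
    then show ?thesis using l2_norm_eq_0[OF au_l2[OF a True]] unfolding sec_zero_def by simp
  next
    case False then show ?thesis using au_neg[OF a] unfolding sec_zero_def by simp
  qed
qed

end


lemma l2_norm_conv_coord:
  assumes Y: "\<And>k. Y k \<in> l2" and y: "y \<in> l2"
    and c: "(\<lambda>k. l2_norm (l2_diff (Y k) y)) \<longlonglongrightarrow> 0"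
  shows "(\<lambda>k. Y k n) \<longlonglongrightarrow> y n"
proof -
  have "(\<lambda>k. Y k n - y n) \<longlonglongrightarrow> 0"
  proof (rule Lim_null_comparison[OF _ c])
    show "\<forall>\<^sub>F k in sequentially. norm (Y k n - y n) \<le> l2_norm (l2_diff (Y k) y)"
      using l2_coord_le[OF l2_diff_mem[OF Y y]] by (simp add: l2_diff_def)
  qed
  then show ?thesis by (rule LIM_zero_cancel)
qed

lemma l2_inner_zero_left: "l2_inner l2_zero y = 0"
  unfolding l2_inner_def l2_zero_def by simp

context psys
begin

lemma pm_diff_left:
  assumes st: "s > 0" "t > 0" and x: "x \<in> E s" and x': "x' \<in> E s" and y: "y \<in> E t"
  shows "pm s t (l2_diff x x') y = l2_diff (pm s t x y) (pm s t x' y)"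
  unfolding l2_diff_eq using assms E_scale[OF st(1) x']
  by (simp add: pm_add_left pm_scale_left)

lemma pm_norm:
  assumes st: "s > 0" "t > 0" and x: "x \<in> E s" and y: "y \<in> E t"
  shows "l2_norm (pm s t x y) = l2_norm x * l2_norm y"
proof -
  have st': "s + t > 0" using st by simp
  have pl: "pm s t x y \<in> l2" using E_l2[OF st' pm_mem[OF st x y]] .
  have xl: "x \<in> l2" and yl: "y \<in> l2" using E_l2 st x y by auto
  have "complex_of_real ((l2_norm (pm s t x y))\<^sup>2) = complex_of_real ((l2_norm x * l2_norm y)\<^sup>2)"
    using pm_inner[OF st x x y y] l2_inner_self[OF pl] l2_inner_self[OF xl] l2_inner_self[OF yl]
    by (simp add: power_mult_distrib)
  then have "(l2_norm (pm s t x y))\<^sup>2 = (l2_norm x * l2_norm y)\<^sup>2" by (simp only: of_real_eq_iff)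
  then show ?thesis using l2_norm_nonneg[OF pl] l2_norm_nonneg[OF xl] l2_norm_nonneg[OF yl]
    by (simp add: power2_eq_iff_nonneg)
qed

lemma u_norm: "t > 0 \<Longrightarrow> l2_norm (u t) = 1"
  using NU unfolding normalized_unit_def by blast

lemma sec_diff_at: "sec_add a (sec_scale (-1) b) t = l2_diff (a t) (b t)"
  unfolding sec_add_def sec_scale_def l2_diff_eq by simp

lemma sec_norm_eq:
  assumes a: "a \<in> V" and b: "b \<in> V"
  shows "sqrt (Re (sec_inner (sec_add a (sec_scale (-1) b)) (sec_add a (sec_scale (-1) b)))) =
         l2_norm (l2_diff (a 1) (b 1))"
proof -
  have l: "l2_diff (a 1) (b 1) \<in> l2" using au_l2[OF a] au_l2[OF b] by (simp add: l2_diff_mem)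
  show ?thesis unfolding sec_inner_def sec_diff_at using l2_inner_self[OF l] l2_norm_nonneg[OF l] by simp
qed

lemma V_complete:
  assumes X: "\<And>k. X k \<in> V"
    and C: "\<forall>\<epsilon>>0. \<exists>N. \<forall>m\<ge>N. \<forall>n\<ge>N.
      sqrt (Re (sec_inner (sec_add (X m) (sec_scale (-1) (X n))) (sec_add (X m) (sec_scale (-1) (X n))))) < \<epsilon>"
  shows "\<exists>x\<in>V. (\<lambda>k. sqrt (Re (sec_inner (sec_add (X k) (sec_scale (-1) x)) (sec_add (X k) (sec_scale (-1) x)))))
                    \<longlonglongrightarrow> 0"
proof -
  have C1: "\<exists>N. \<forall>m\<ge>N. \<forall>n\<ge>N. l2_norm (l2_diff (X m 1) (X n 1)) < e" if "e > 0" for e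
    using C that by (simp add: sec_norm_eq X)
  have Ct: "\<exists>N. \<forall>m\<ge>N. \<forall>n\<ge>N. l2_norm (l2_diff (X m t) (X n t)) < e" if t: "t > 0" and e: "e > 0" for t e
  proof -
    define K where "K = sqrt (t + t\<^sup>2)"
    have K: "K > 0" unfolding K_def using t by (simp add: add_pos_nonneg)
    obtain N where N: "\<forall>m\<ge>N. \<forall>n\<ge>N. l2_norm (l2_diff (X m 1) (X n 1)) < e / K"
      using C1[of "e / K"] e K by auto
    have "l2_norm (l2_diff (X m t) (X n t)) < e" if "m \<ge> N" "n \<ge> N" for m n
    proof -
      define w where "w = sec_add (X m) (sec_scale (-1) (X n))"
      have w: "w \<in> V" unfolding w_def by (intro sec_add_V sec_scale_V X)
      have wt: "w t = l2_diff (X m t) (X n t)" "w 1 = l2_diff (X m 1) (X n 1)"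
        unfolding w_def sec_diff_at by simp_all
      have "(l2_norm (w t))\<^sup>2 \<le> (t + t\<^sup>2) * (l2_norm (w 1))\<^sup>2" by (rule au_norm_bound[OF w t])
      also have "\<dots> = (K * l2_norm (w 1))\<^sup>2" unfolding K_def using t by (simp add: power_mult_distrib)
      finally have sq: "(l2_norm (w t))\<^sup>2 \<le> (K * l2_norm (w 1))\<^sup>2" .
      have nn: "0 \<le> K * l2_norm (w 1)"
        using K l2_norm_nonneg[OF au_l2[OF w, of 1]] by simp
      have "l2_norm (w t) \<le> K * l2_norm (w 1)" using sq nn by (rule power2_le_imp_le)
      also have "l2_norm (w 1) < e / K"
      proof -
        have "l2_norm (l2_diff (X m 1) (X n 1)) < e / K" using N that by blast
        then show ?thesis using wt(2) by simp
      qed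
      then have "K * l2_norm (w 1) < K * (e / K)" using K by (rule mult_strict_left_mono)
      also have "\<dots> = e" using K by simp
      finally show ?thesis using wt(1) by simp
    qed
    then show ?thesis by blast
  qed
  define x where "x t = (\<lambda>n. lim (\<lambda>k. X k t n))" for t
  have lim_t: "x t \<in> l2 \<and> (\<lambda>k. l2_norm (l2_diff (X k t) (x t))) \<longlonglongrightarrow> 0 \<and> (\<forall>n. (\<lambda>k. X k t n) \<longlonglongrightarrow> x t n)"
    if t: "t > 0" for t
  proof -
    note L = l2_complete[of "\<lambda>k. X k t", OF au_l2[OF X t] Ct[OF t]]
    have "x t = (\<lambda>n. lim (\<lambda>k. X k t n))" unfolding x_def ..
    then show ?thesis using L by simp
  qed
  have xneg: "x t = l2_zero" if "t \<le> 0" for t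
    unfolding x_def using au_neg[OF X that] by (simp add: l2_zero_def)
  have xE: "x t \<in> E t" if t: "t > 0" for t
  proof (rule E_closed[OF t au_mem[OF X t]])
    show "x t \<in> l2" using lim_t[OF t] by simp
    show "(\<lambda>k. l2_norm (l2_diff (X k t) (x t))) \<longlonglongrightarrow> 0" using lim_t[OF t] by simp
  qed
  have xV: "x \<in> V"
    unfolding add_units_def additive_unit_def meas_section_def
  proof (intro CollectI conjI allI impI)
    fix t :: real assume "t > 0" then show "x t \<in> E t" by (rule xE)
  next
    fix n
    show "(\<lambda>t. x t n) \<in> borel_measurable (restrict_space borel {0<..})"
    proof (rule borel_measurable_LIMSEQ_metric)
      show "(\<lambda>t. X k t n) \<in> borel_measurable (restrict_space borel {0<..})" for k
        using au_meas[OF X] unfolding meas_section_def by blast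
      fix t assume "t \<in> space (restrict_space borel ({0<..} :: real set))"
      then have "t > 0" by (simp add: space_R)
      then show "(\<lambda>k. X k t n) \<longlonglongrightarrow> x t n" using lim_t by blast
    qed
  next
    fix t :: real assume "t \<le> 0" then show "x t = l2_zero" by (rule xneg)
  next
    fix s t :: real assume s: "s > 0" and t: "t > 0"
    have st: "s + t > 0" using s t by simp
    show "x (s + t) = l2_add (pm s t (x s) (u t)) (pm s t (u s) (x t))"
    proof
      fix n
      have c1: "(\<lambda>k. pm s t (X k s) (u t) n) \<longlonglongrightarrow> pm s t (x s) (u t) n"
      proof (rule l2_norm_conv_coord)
        show "pm s t (X k s) (u t) \<in> l2" for k using E_l2[OF st pm_mem[OF s t au_mem[OF X s] u_mem[OF t]]] .
        show "pm s t (x s) (u t) \<in> l2" using E_l2[OF st pm_mem[OF s t xE[OF s] u_mem[OF t]]] .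
        have "l2_norm (l2_diff (pm s t (X k s) (u t)) (pm s t (x s) (u t))) = l2_norm (l2_diff (X k s) (x s))" for k
          using pm_diff_left[OF s t au_mem[OF X s] xE[OF s] u_mem[OF t]]
            pm_norm[OF s t E_diff[OF s au_mem[OF X s] xE[OF s]] u_mem[OF t]] u_norm[OF t] by simp
        then show "(\<lambda>k. l2_norm (l2_diff (pm s t (X k s) (u t)) (pm s t (x s) (u t)))) \<longlonglongrightarrow> 0"
          using lim_t[OF s] by simp
      qed
      have c2: "(\<lambda>k. pm s t (u s) (X k t) n) \<longlonglongrightarrow> pm s t (u s) (x t) n"
      proof (rule l2_norm_conv_coord)
        show "pm s t (u s) (X k t) \<in> l2" for k using E_l2[OF st pm_mem[OF s t u_mem[OF s] au_mem[OF X t]]] .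
        show "pm s t (u s) (x t) \<in> l2" using E_l2[OF st pm_mem[OF s t u_mem[OF s] xE[OF t]]] .
        have "pm s t (u s) (l2_diff (X k t) (x t)) = l2_diff (pm s t (u s) (X k t)) (pm s t (u s) (x t))" for k
          unfolding l2_diff_eq using s t u_mem[OF s] au_mem[OF X t] xE[OF t] E_scale[OF t xE[OF t]]
          by (simp add: pm_add_right pm_scale_right)
        then have "l2_norm (l2_diff (pm s t (u s) (X k t)) (pm s t (u s) (x t))) = l2_norm (l2_diff (X k t) (x t))" for k
          using pm_norm[OF s t u_mem[OF s] E_diff[OF t au_mem[OF X t] xE[OF t]]] u_norm[OF s] by simp
        then show "(\<lambda>k. l2_norm (l2_diff (pm s t (u s) (X k t)) (pm s t (u s) (x t)))) \<longlonglongrightarrow> 0"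
          using lim_t[OF t] by simp
      qed
      have "(\<lambda>k. X k (s + t) n) \<longlonglongrightarrow> l2_add (pm s t (x s) (u t)) (pm s t (u s) (x t)) n"
        unfolding au_add[OF X s t] l2_add_def by (intro tendsto_add c1 c2)
      moreover have "(\<lambda>k. X k (s + t) n) \<longlonglongrightarrow> x (s + t) n" using lim_t[OF st] by blast
      ultimately show "x (s + t) n = l2_add (pm s t (x s) (u t)) (pm s t (u s) (x t)) n"
        using LIMSEQ_unique by blast
    qed
  qed
  have "(\<lambda>k. sqrt (Re (sec_inner (sec_add (X k) (sec_scale (-1) x)) (sec_add (X k) (sec_scale (-1) x))))) \<longlonglongrightarrow> 0"
    using lim_t[of 1] by (simp add: sec_norm_eq X xV)
  then show ?thesis using xV by blast
qed

end


context psys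
begin

lemma hilbert: "hilbert_space V sec_add sec_scale sec_zero sec_inner"
  unfolding hilbert_space_def
proof (intro conjI ballI allI impI)
  show "sec_zero \<in> V" by (rule sec_zero_V)
next
  fix x y assume "x \<in> V" "y \<in> V" then show "sec_add x y \<in> V" by (rule sec_add_V)
next
  fix c x assume "x \<in> V" then show "sec_scale c x \<in> V" by (rule sec_scale_V)
next
  fix x y z :: "real \<Rightarrow> l2vec"
  show "sec_add (sec_add x y) z = sec_add x (sec_add y z)"
    unfolding sec_add_def l2_add_def by (simp add: add.assoc)
next
  fix x y :: "real \<Rightarrow> l2vec"
  show "sec_add x y = sec_add y x"
    unfolding sec_add_def l2_add_def by (simp add: add.commute)
next
  fix x :: "real \<Rightarrow> l2vec"
  show "sec_add x sec_zero = x"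
    unfolding sec_add_def l2_add_def sec_zero_def l2_zero_def by simp
next
  fix x assume x: "x \<in> V"
  show "\<exists>y\<in>V. sec_add x y = sec_zero"
  proof (intro bexI)
    show "sec_scale (-1) x \<in> V" using x by (rule sec_scale_V)
    show "sec_add x (sec_scale (-1) x) = sec_zero"
      unfolding sec_add_def l2_add_def sec_zero_def l2_zero_def sec_scale_def l2_scale_def by simp
  qed
next
  fix c d :: complex and x :: "real \<Rightarrow> l2vec"
  show "sec_scale c (sec_scale d x) = sec_scale (c * d) x"
    unfolding sec_scale_def l2_scale_def by (simp add: mult.assoc)
next
  fix x :: "real \<Rightarrow> l2vec"
  show "sec_scale 1 x = x" unfolding sec_scale_def l2_scale_def by simp
next
  fix c :: complex and x y :: "real \<Rightarrow> l2vec"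
  show "sec_scale c (sec_add x y) = sec_add (sec_scale c x) (sec_scale c y)"
    unfolding sec_scale_def l2_scale_def sec_add_def l2_add_def by (simp add: distrib_left)
next
  fix c d :: complex and x :: "real \<Rightarrow> l2vec"
  show "sec_scale (c + d) x = sec_add (sec_scale c x) (sec_scale d x)"
    unfolding sec_scale_def l2_scale_def sec_add_def l2_add_def by (simp add: distrib_right)
next
  fix x y z assume x: "x \<in> V" and y: "y \<in> V" and z: "z \<in> V"
  show "sec_inner (sec_add x y) z = sec_inner x z + sec_inner y z"
    unfolding sec_inner_def sec_add_def using au_l2[OF x] au_l2[OF y] au_l2[OF z]
    by (simp add: l2_inner_add_left)
next
  fix c x y assume x: "x \<in> V" and y: "y \<in> V"
  show "sec_inner (sec_scale c x) y = c * sec_inner x y"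
    unfolding sec_inner_def sec_scale_def using au_l2[OF x] au_l2[OF y]
    by (simp add: l2_inner_scale_left)
next
  fix x y assume x: "x \<in> V" and y: "y \<in> V"
  show "sec_inner y x = cnj (sec_inner x y)"
    unfolding sec_inner_def by (rule l2_inner_cnj[OF au_l2[OF x] au_l2[OF y]]) simp_all
next
  fix x assume x: "x \<in> V"
  show "sec_inner x x \<in> \<real>"
    unfolding sec_inner_def using l2_inner_self[OF au_l2[OF x, of 1]] by simp
  show "0 \<le> Re (sec_inner x x)"
    unfolding sec_inner_def using l2_inner_self[OF au_l2[OF x, of 1]] by simp
next
  fix x assume x: "x \<in> V" and "sec_inner x x = 0"
  then show "x = sec_zero" unfolding sec_inner_def by (rule au_zero)
next
  fix X :: "nat \<Rightarrow> real \<Rightarrow> l2vec"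
  assume A: "(\<forall>k. X k \<in> V) \<and>
       (\<forall>\<epsilon>>0. \<exists>N. \<forall>m\<ge>N. \<forall>n\<ge>N.
          sqrt (Re (sec_inner (sec_add (X m) (sec_scale (- 1) (X n))) (sec_add (X m) (sec_scale (- 1) (X n))))) < \<epsilon>)"
  show "\<exists>x\<in>V. (\<lambda>k. sqrt (Re (sec_inner (sec_add (X k) (sec_scale (- 1) x)) (sec_add (X k) (sec_scale (- 1) x))))) \<longlonglongrightarrow> 0"
    using A V_complete by blast
qed

lemma roots_closed: "closed_subspace_of (roots E pm u) V sec_add sec_scale sec_zero sec_inner"
  unfolding closed_subspace_of_def
proof (intro conjI ballI allI impI)
  show "roots E pm u \<subseteq> V" using root_au by blast
next
  show "sec_zero \<in> roots E pm u"
    using sec_zero_V unfolding roots_def root_def add_units_def sec_zero_def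
    by (simp add: l2_inner_zero_left)
next
  fix x y assume x: "x \<in> roots E pm u" and y: "y \<in> roots E pm u"
  have "sec_add x y \<in> V" using root_au[OF x] root_au[OF y] by (rule sec_add_V)
  moreover have "l2_inner (sec_add x y t) (u t) = 0" if t: "t > 0" for t
    unfolding sec_add_def using au_l2[OF root_au[OF x] t] au_l2[OF root_au[OF y] t] u_l2[OF t]
      root_orth[OF x t] root_orth[OF y t] by (simp add: l2_inner_add_left)
  ultimately show "sec_add x y \<in> roots E pm u" unfolding roots_def root_def add_units_def by blast
next
  fix c x assume x: "x \<in> roots E pm u"
  have "sec_scale c x \<in> V" using root_au[OF x] by (rule sec_scale_V)
  moreover have "l2_inner (sec_scale c x t) (u t) = 0" if t: "t > 0" for t
    unfolding sec_scale_def using au_l2[OF root_au[OF x] t] u_l2[OF t]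
      root_orth[OF x t] by (simp add: l2_inner_scale_left)
  ultimately show "sec_scale c x \<in> roots E pm u" unfolding roots_def root_def add_units_def by blast
next
  fix X x
  assume A: "(\<forall>k. X k \<in> roots E pm u) \<and> x \<in> V \<and>
    (\<lambda>k. sqrt (Re (sec_inner (sec_add (X k) (sec_scale (- 1) x)) (sec_add (X k) (sec_scale (- 1) x))))) \<longlonglongrightarrow> 0"
  then have X: "\<And>k. X k \<in> roots E pm u" and x: "x \<in> V" by auto
  have XV: "\<And>k. X k \<in> V" using X root_au by blast
  have lim: "(\<lambda>k. l2_norm (l2_diff (X k 1) (x 1))) \<longlonglongrightarrow> 0"
    using A by (simp add: sec_norm_eq XV x)
  have u1: "u 1 \<in> l2" "l2_inner (u 1) (u 1) = 1" using u_l2 u_inner by auto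
  have bnd: "cmod (l2_inner (x 1) (u 1)) \<le> l2_norm (l2_diff (X k 1) (x 1))" for k
  proof -
    have "l2_inner (l2_diff (X k 1) (x 1)) (u 1) = l2_inner (X k 1) (u 1) + (-1) * l2_inner (x 1) (u 1)"
      unfolding l2_diff_eq using au_l2[OF XV, of 1] au_l2[OF x, of 1] u1
      by (simp add: l2_inner_add_left l2_inner_scale_left l2_scale_mem)
    also have "\<dots> = - l2_inner (x 1) (u 1)" using root_orth[OF X, of 1] by simp
    finally have "cmod (l2_inner (x 1) (u 1)) = cmod (l2_inner (l2_diff (X k 1) (x 1)) (u 1))" by simp
    also have "\<dots> \<le> l2_norm (l2_diff (X k 1) (x 1))"
      using l2_diff_mem[OF au_l2[OF XV, of 1] au_l2[OF x, of 1]] u1 by (intro l2_inner_unit_le) auto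
    finally show ?thesis .
  qed
  have "cmod (l2_inner (x 1) (u 1)) \<le> 0"
    using lim by (rule LIMSEQ_le_const) (use bnd in blast)
  then have x1: "l2_inner (x 1) (u 1) = 0" by simp
  have "l2_inner (x t) (u t) = 0" if t: "t > 0" for t
    using au_inner_u[OF x t] x1 by simp
  then show "x \<in> roots E pm u" using x unfolding roots_def root_def add_units_def by blast
qed

lemma codim: "codim_one (roots E pm u) V sec_add sec_scale"
  unfolding codim_one_def
proof (intro bexI conjI ballI)
  show "a0 \<in> V" by (rule a0_V)
  show "a0 \<notin> roots E pm u"
  proof
    assume "a0 \<in> roots E pm u"
    from root_orth[OF this, of 1] show False using u_inner[of 1] by (simp add: a0_def l2_inner_scale_left u_l2)
  qed
  fix b assume b: "b \<in> V"
  show "\<exists>c. \<exists>r\<in>roots E pm u. b = sec_add r (sec_scale c a0)"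
  proof (intro exI bexI)
    show "rt b \<in> roots E pm u" using b by (rule rt_root)
    show "b = sec_add (rt b) (sec_scale (l2_inner (b 1) (u 1)) a0)"
      unfolding rt_def sec_add_def sec_scale_def l2_add_def l2_scale_def by (simp add: fun_eq_iff)
  qed
qed

end

theorem mainTheorem1:
  fixes E :: "real \<Rightarrow> l2vec set"
    and pm :: "real \<Rightarrow> real \<Rightarrow> l2vec \<Rightarrow> l2vec \<Rightarrow> l2vec"
    and u :: "real \<Rightarrow> l2vec"
  assumes "product_system E pm"
    and "normalized_unit E pm u"
  shows "hilbert_space (add_units E pm u) sec_add sec_scale sec_zero sec_inner \<and>
         closed_subspace_of (roots E pm u) (add_units E pm u) sec_add sec_scale sec_zero sec_inner \<and>
         codim_one (roots E pm u) (add_units E pm u) sec_add sec_scale"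
proof -
  interpret psys E pm u using assms by unfold_locales
  show ?thesis using hilbert roots_closed codim by blast
qed


end
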